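(* Let $\mathbf{k}$ be a commutative ring, $\lambda\in\mathbf{k}$ and $X$ a set. Then $(\mathbf{k}\mathcal{F}_X^a,\diamond,u,\Delta_a,\epsilon_a)$ is a Hopf algebra, i.e. this bialgebra admits an antipode $S$.
   Context: Angularly decorated forests. The set $\mathcal{F}_X^a$ of angularly decorated (planar rooted) forests and its subset of angularly decorated trees are defined recursively: the one-vertex tree $\bullet$ is a tree; if $T_1,\dots,T_k$ ($k\ge1$) are trees and $x_1,\dots,x_{k-1}\in X$, then the word $T_1x_1T_2x_2\cdots x_{k-1}T_k$ is a forest (for $k=1$ it is the tree $T_1$); and if $F=T_1x_1\cdots x_{k-1}T_k$ is a forest, then $B^+(F)$ is a tree, namely the planar tree obtained by adding a new root joined by edges to the roots of $T_1,\dots,T_k$, the decoration $x_i$ sitting in the angle between the $i$-th and $(i+1)$-th children. The depth of a tree is the maximal length of a path from root to a leaf; the depth of a forest is the maximum depth of its trees. $\mathbf{k}\mathcal{F}_X^a$ is the free $\mathbf{k}$-module on $\mathcal{F}_X^a$; $B^+$ is extended linearly. Product. The bilinear product $\diamond$ is defined by recursion on the sum of depths: for trees, $\bullet\diamond\bullet=\bullet$, $T\diamond\bullet=T$, $\bullet\diamond T=T$, and $B^+(\overline{T})\diamond B^+(\overline{T'})=B^+\big(B^+(\overline{T})\diamond\overline{T'}\big)+B^+\big(\overline{T}\diamond B^+(\overline{T'})\big)+\lambda B^+\big(\overline{T}\diamond\overline{T'}\big)$; for forests $T=T_1x_1\cdots x_{m-1}T_m$ and $T'=T'_1y_1\cdots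 y_{n-1}T'_n$, $T\diamond T'=T_1x_1\cdots x_{m-1}(T_m\diamond T'_1)y_1T'_2\cdots y_{n-1}T'_n$, extended linearly in the middle factor. Unit $u:\mathbf{k}\to\mathbf{k}\mathcal{F}_X^a$, $1\mapsto\bullet$; counit $\epsilon_a(\bullet)=1$, $\epsilon_a(F)=0$ for $F\in\mathcal{F}_X^a\setminus\{\bullet\}$. Coproduct. Let $F\in\mathcal{F}_X^a$. A non-leaf vertex is a vertex with at least one child. For a non-leaf vertex $v$, the rooted subtree $F_v$ consists of $v$, its descendants, the edges between them and all decorations in angles between children of its vertices. A decoration occurrence is an occurrence of a letter of $X$ in $F$. An admissible subforest $H$ of $F$ is a finite (possibly empty) set of pieces, each a rooted subtree $F_v$ ($v$ non-leaf) or a single decoration occurrence, pairwise disjoint (no shared vertices among chosen rooted subtrees, no chosen decoration inside a chosen rooted subtree), listed left to right as $H_1,\dots,H_n$. Its closure is $\mathrm{cl}(H)=\widehat{H_1}\diamond\cdots\diamond\widehat{H_n}$ with $\widehat{H_i}=H_i$ for a rooted subtree and $\widehat{H_i}=\bullet x\bullet$ for an occurrence of $x$; $\mathrm{cl}(\emptyset)=\bullet$. The quotient $F/H$ is obtained by replacing each chosen rooted subtree by a leaf $\bullet$ and each chosen decoration occurrence by a symbol $\star$, then evaluating recursively: a word $T_1s_1\cdots s_{k-1}T_k$ ($s_i\in X\cup\{\star\}$) evaluates to $\overline{T_1}\diamond c(s_1)\diamond\cdots\diamond c(s_{k-1})\diamond\overline{T_k}$ with $c(x)=\bullet x\bullet$,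 $c(\star)=\bullet$, $\overline{\bullet}=\bullet$, $\overline{B^+(W)}=B^+(\text{value of }W)$. The angular coproduct is $\Delta_a(F)=\sum_H\mathrm{cl}(H)\otimes F/H$ over all admissible subforests $H$, extended linearly. *)

theory Defs
  imports Main "HOL-Library.Poly_Mapping"
begin

text \<open>The free k-module on a set B is modelled as the type of finitely supported
  functions; the basis element b is single b 1.  The tensor product of free modules on A and B
  is identified with the free module on A \<times> B.  k-linear maps are determined by their
  values on basis elements; lin f is the linear extension of f.\<close>

definition bas :: "'b \<Rightarrow> ('b \<Rightarrow>\<^sub>0 'k::comm_ring_1)" where
  "bas b = Poly_Mapping.single b 1"

definition smult :: "'k::comm_ring_1 \<Rightarrow> ('b \<Rightarrow>\<^sub>0 'k) \<Rightarrow> ('b \<Rightarrow>\<^sub>0 'k)" where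
  "smult c v = Poly_Mapping.map (\<lambda>x. c * x) v"

definition lin :: "('a \<Rightarrow> ('b \<Rightarrow>\<^sub>0 'k::comm_ring_1)) \<Rightarrow> ('a \<Rightarrow>\<^sub>0 'k) \<Rightarrow> ('b \<Rightarrow>\<^sub>0 'k)" where
  "lin f v = (\<Sum>a\<in>Poly_Mapping.keys v. smult (Poly_Mapping.lookup v a) (f a))"

definition lin_scalar :: "('a \<Rightarrow> 'k::comm_ring_1) \<Rightarrow> ('a \<Rightarrow>\<^sub>0 'k) \<Rightarrow> 'k" where
  "lin_scalar f v = (\<Sum>a\<in>Poly_Mapping.keys v. Poly_Mapping.lookup v a * f a)"

definition bilin :: "('a \<Rightarrow> 'b \<Rightarrow> ('c \<Rightarrow>\<^sub>0 'k::comm_ring_1)) \<Rightarrow> ('a \<Rightarrow>\<^sub>0 'k) \<Rightarrow> ('b \<Rightarrow>\<^sub>0 'k) \<Rightarrow> ('c \<Rightarrow>\<^sub>0 'k)" where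
  "bilin f u v = lin (\<lambda>a. lin (\<lambda>b. f a b) v) u"

definition tensor :: "('a \<Rightarrow>\<^sub>0 'k::comm_ring_1) \<Rightarrow> ('b \<Rightarrow>\<^sub>0 'k) \<Rightarrow> ('a \<times> 'b \<Rightarrow>\<^sub>0 'k)" where
  "tensor u v = bilin (\<lambda>a b. bas (a, b)) u v"

text \<open>Data: multiplication of basis elements mult, unit element one (= u(1)),
  coproduct of basis elements comult (valued in A \<otimes> A), counit of basis elements counit.\<close>

definition is_bialgebra ::
  "('a \<Rightarrow> 'a \<Rightarrow> ('a \<Rightarrow>\<^sub>0 'k::comm_ring_1)) \<Rightarrow> ('a \<Rightarrow>\<^sub>0 'k) \<Rightarrow> ('a \<Rightarrow> ('a \<times> 'a \<Rightarrow>\<^sub>0 'k)) \<Rightarrow> ('a \<Rightarrow> 'k) \<Rightarrow> bool"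
where
  "is_bialgebra mult one comult counit \<longleftrightarrow>
     \<comment> \<open>associativity\<close>
     (\<forall>a b c. bilin mult (mult a b) (bas c) = bilin mult (bas a) (mult b c)) \<and>
     \<comment> \<open>unit\<close>
     (\<forall>a. bilin mult one (bas a) = bas a \<and> bilin mult (bas a) one = bas a) \<and>
     \<comment> \<open>coassociativity\<close>
     (\<forall>a. lin (\<lambda>(x, y). lin (\<lambda>(p, q). bas (p, q, y)) (comult x)) (comult a)
        = lin (\<lambda>(x, y). lin (\<lambda>(p, q). bas (x, p, q)) (comult y)) (comult a)) \<and>
     \<comment> \<open>counit\<close>
     (\<forall>a. lin (\<lambda>(x, y). smult (counit x) (bas y)) (comult a) = bas a \<and>
          lin (\<lambda>(x, y). smult (counit y) (bas x)) (comult a) = bas a) \<and>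
     \<comment> \<open>coproduct is an algebra morphism A \<rightarrow> A \<otimes> A\<close>
     (\<forall>a b. lin comult (mult a b)
        = bilin (\<lambda>(x, y) (x', y'). tensor (mult x x') (mult y y')) (comult a) (comult b)) \<and>
     lin comult one = tensor one one \<and>
     \<comment> \<open>counit is an algebra morphism A \<rightarrow> k\<close>
     (\<forall>a b. lin_scalar counit (mult a b) = counit a * counit b) \<and>
     lin_scalar counit one = 1"

definition is_antipode ::
  "('a \<Rightarrow> 'a \<Rightarrow> ('a \<Rightarrow>\<^sub>0 'k::comm_ring_1)) \<Rightarrow> ('a \<Rightarrow>\<^sub>0 'k) \<Rightarrow> ('a \<Rightarrow> ('a \<times> 'a \<Rightarrow>\<^sub>0 'k)) \<Rightarrow> ('a \<Rightarrow> 'k)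
    \<Rightarrow> ('a \<Rightarrow> ('a \<Rightarrow>\<^sub>0 'k)) \<Rightarrow> bool"
where
  "is_antipode mult one comult counit S \<longleftrightarrow>
     (\<forall>a. lin (\<lambda>(x, y). bilin mult (S x) (bas y)) (comult a) = smult (counit a) one \<and>
          lin (\<lambda>(x, y). bilin mult (bas x) (S y)) (comult a) = smult (counit a) one)"

definition is_hopf_algebra ::
  "('a \<Rightarrow> 'a \<Rightarrow> ('a \<Rightarrow>\<^sub>0 'k::comm_ring_1)) \<Rightarrow> ('a \<Rightarrow>\<^sub>0 'k) \<Rightarrow> ('a \<Rightarrow> ('a \<times> 'a \<Rightarrow>\<^sub>0 'k)) \<Rightarrow> ('a \<Rightarrow> 'k) \<Rightarrow> bool"
where
  "is_hopf_algebra mult one comult counit \<longleftrightarrow>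
     is_bialgebra mult one comult counit \<and> (\<exists>S. is_antipode mult one comult counit S)"

text \<open>A tree is the one-vertex tree Leaf or B+(F) = Node F.  A forest T1 x1 T2 ... x(k-1) Tk
  is Forest T1 [(x1,T2), ..., (x(k-1),Tk)]; a tree T, as a forest, is Forest T [].\<close>

datatype 'x tree = Leaf | Node "'x forest"
     and 'x forest = Forest "'x tree" "('x \<times> 'x tree) list"

fun ffirst :: "'x forest \<Rightarrow> 'x tree" where
  "ffirst (Forest t ps) = t"

fun flast :: "'x forest \<Rightarrow> 'x tree" where
  "flast (Forest t ps) = (if ps = [] then t else snd (last ps))"

fun set_first :: "'x forest \<Rightarrow> 'x tree \<Rightarrow> 'x forest" where
  "set_first (Forest t ps) T = Forest T ps"

fun set_last :: "'x forest \<Rightarrow> 'x tree \<Rightarrow> 'x forest" where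
  "set_last (Forest t ps) T =
     (if ps = [] then Forest T [] else Forest t (butlast ps @ [(fst (last ps), T)]))"

text \<open>join F G T: the forest F1 x1 ... x(m-1) T y1 G2 ... y(n-1) Gn.\<close>
fun join :: "'x forest \<Rightarrow> 'x forest \<Rightarrow> 'x tree \<Rightarrow> 'x forest" where
  "join (Forest t ps) (Forest t' qs) T =
     (if ps = [] then Forest T qs else Forest t (butlast ps @ [(fst (last ps), T)] @ qs))"

lemma size_flast_le: "size (flast F) \<le> size F"
proof (cases F)
  case (Forest t ps)
  show ?thesis
  proof (cases "ps = []")
    case False
    then have "last ps \<in> set ps" by simp
    moreover obtain a b where "last ps = (a, b)" by (cases "last ps")
    ultimately have "size b \<le> size_list (size_prod (\<lambda>_. 0) size) ps"
      by (intro size_list_estimation'[of "(a, b)"]) auto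
    then show ?thesis using Forest False \<open>last ps = (a, b)\<close> by simp
  qed (simp add: Forest)
qed

lemma size_ffirst_le: "size (ffirst F) \<le> size F"
  by (cases F) simp

function tprod :: "'k::comm_ring_1 \<Rightarrow> 'x tree \<Rightarrow> 'x tree \<Rightarrow> ('x tree \<Rightarrow>\<^sub>0 'k)" where
  "tprod lam Leaf T = bas T"
| "tprod lam (Node F) Leaf = bas (Node F)"
| "tprod lam (Node F) (Node G) =
      lin (\<lambda>T. bas (Node (set_first G T))) (tprod lam (Node F) (ffirst G))
    + lin (\<lambda>T. bas (Node (set_last F T))) (tprod lam (flast F) (Node G))
    + smult lam (lin (\<lambda>T. bas (Node (join F G T))) (tprod lam (flast F) (ffirst G)))"
  by pat_completeness auto
termination
  by (relation "measure (\<lambda>(_, a, b). size a + size b)")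
     (auto simp: le_imp_less_Suc size_ffirst_le size_flast_le
        intro: add_mono le_imp_less_Suc less_SucI
        le_less_trans[OF add_mono[OF size_flast_le size_ffirst_le]])

definition fprod :: "'k::comm_ring_1 \<Rightarrow> 'x forest \<Rightarrow> 'x forest \<Rightarrow> ('x forest \<Rightarrow>\<^sub>0 'k)" where
  "fprod lam F G = lin (\<lambda>T. bas (join F G T)) (tprod lam (flast F) (ffirst G))"

definition dot :: "'x forest" where
  "dot = Forest Leaf []"

definition counit_a :: "'x forest \<Rightarrow> 'k::comm_ring_1" where
  "counit_a F = (if F = dot then 1 else 0)"

text \<open>Pieces of an admissible subforest: a rooted subtree F_v (v non-leaf) or a decoration
  occurrence.  The quotient skeleton is a word in which chosen rooted subtrees have been
  replaced by a leaf and chosen decorations by the symbol star (None).\<close>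

datatype 'x piece = PTree "'x tree" | PDec 'x

datatype 'x qtree = QLeaf | QNode "'x qforest"
     and 'x qforest = QForest "'x qtree" "('x option \<times> 'x qtree) list"

text \<open>Enumeration of all admissible subforests H (listed left to right) together with the
  corresponding word obtained from F by the replacements; each admissible subforest occurs
  exactly once.\<close>
fun choices_t :: "'x tree \<Rightarrow> ('x piece list \<times> 'x qtree) list"
and choices_f :: "'x forest \<Rightarrow> ('x piece list \<times> 'x qforest) list"
and choices_ps :: "('x \<times> 'x tree) list \<Rightarrow> ('x piece list \<times> ('x option \<times> 'x qtree) list) list"
where
  "choices_t Leaf = [([], QLeaf)]"
| "choices_t (Node F) = ([PTree (Node F)], QLeaf) # map (\<lambda>(H, q). (H, QNode q)) (choices_f F)"
| "choices_f (Forest t ps) =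
     concat (map (\<lambda>(H, q). map (\<lambda>(H', qs). (H @ H', QForest q qs)) (choices_ps ps)) (choices_t t))"
| "choices_ps [] = [([], [])]"
| "choices_ps ((x, t) # ps) =
     concat (map (\<lambda>(D, s). concat (map (\<lambda>(H, q). map (\<lambda>(H', qs). (D @ H @ H', (s, q) # qs))
        (choices_ps ps)) (choices_t t))) [([], Some x), ([PDec x], None)])"

definition as_forest :: "('x tree \<Rightarrow>\<^sub>0 'k::comm_ring_1) \<Rightarrow> ('x forest \<Rightarrow>\<^sub>0 'k)" where
  "as_forest v = lin (\<lambda>T. bas (Forest T [])) v"

definition cdec :: "'x option \<Rightarrow> ('x forest \<Rightarrow>\<^sub>0 'k::comm_ring_1)" where
  "cdec s = (case s of Some x \<Rightarrow> bas (Forest Leaf [(x, Leaf)]) | None \<Rightarrow> bas dot)"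

fun eval_t :: "'k::comm_ring_1 \<Rightarrow> 'x qtree \<Rightarrow> ('x tree \<Rightarrow>\<^sub>0 'k)"
and eval_f :: "'k::comm_ring_1 \<Rightarrow> 'x qforest \<Rightarrow> ('x forest \<Rightarrow>\<^sub>0 'k)"
and eval_ps :: "'k::comm_ring_1 \<Rightarrow> ('x forest \<Rightarrow>\<^sub>0 'k) \<Rightarrow> ('x option \<times> 'x qtree) list \<Rightarrow> ('x forest \<Rightarrow>\<^sub>0 'k)"
where
  "eval_t lam QLeaf = bas Leaf"
| "eval_t lam (QNode W) = lin (\<lambda>F. bas (Node F)) (eval_f lam W)"
| "eval_f lam (QForest q qs) = eval_ps lam (as_forest (eval_t lam q)) qs"
| "eval_ps lam acc [] = acc"
| "eval_ps lam acc ((s, q) # qs) =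
     eval_ps lam (bilin (fprod lam) (bilin (fprod lam) acc (cdec s)) (as_forest (eval_t lam q))) qs"

definition hat :: "'x piece \<Rightarrow> ('x forest \<Rightarrow>\<^sub>0 'k::comm_ring_1)" where
  "hat p = (case p of PTree T \<Rightarrow> bas (Forest T []) | PDec x \<Rightarrow> bas (Forest Leaf [(x, Leaf)]))"

definition closure :: "'k::comm_ring_1 \<Rightarrow> 'x piece list \<Rightarrow> ('x forest \<Rightarrow>\<^sub>0 'k)" where
  "closure lam H = (case H of [] \<Rightarrow> bas dot
     | h # hs \<Rightarrow> foldl (\<lambda>acc p. bilin (fprod lam) acc (hat p)) (hat h) hs)"

definition coprod_a :: "'k::comm_ring_1 \<Rightarrow> 'x forest \<Rightarrow> ('x forest \<times> 'x forest \<Rightarrow>\<^sub>0 'k)" where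
  "coprod_a lam F = sum_list (map (\<lambda>(H, q). tensor (closure lam H) (eval_f lam q)) (choices_f F))"

end

theory Submission
  imports Defs
begin


lemma lookup_smult[simp]: "Poly_Mapping.lookup (smult c v) a = c * Poly_Mapping.lookup v a"
  unfolding smult_def by (simp add: Poly_Mapping.map.rep_eq when_def)

lemma smult_add_right: "smult c (u + v) = smult c u + smult c v"
  by (rule poly_mapping_eqI) (simp add: lookup_add algebra_simps)
lemma smult_add_left: "smult (c + d) v = smult c v + smult d v"
  by (rule poly_mapping_eqI) (simp add: lookup_add algebra_simps)
lemma smult_smult[simp]: "smult c (smult d v) = smult (c * d) v"
  by (rule poly_mapping_eqI) (simp add: algebra_simps)
lemma smult_one[simp]: "smult 1 v = v"
  by (rule poly_mapping_eqI) simp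
lemma smult_zero_left[simp]: "smult 0 v = 0"
  by (rule poly_mapping_eqI) simp
lemma smult_zero_right[simp]: "smult c 0 = 0"
  by (rule poly_mapping_eqI) simp
lemma smult_minus_right: "smult c (- v) = - smult c v"
  by (rule poly_mapping_eqI) simp
lemma smult_diff_right: "smult c (u - v) = smult c u - smult c v"
  by (rule poly_mapping_eqI) (simp add: lookup_minus algebra_simps)
lemma smult_sum: "smult c (sum f A) = (\<Sum>a\<in>A. smult c (f a))"
  by (induction A rule: infinite_finite_induct) (auto simp: smult_add_right)
lemma keys_smult: "Poly_Mapping.keys (smult c v) \<subseteq> Poly_Mapping.keys v"
  by (auto simp: in_keys_iff)

lemma lin_alt:
  assumes "finite A" "Poly_Mapping.keys v \<subseteq> A"
  shows "lin f v = (\<Sum>a\<in>A. smult (Poly_Mapping.lookup v a) (f a))"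
  unfolding lin_def
  by (rule sum.mono_neutral_left) (use assms in \<open>auto simp: in_keys_iff\<close>)

lemma lin_zero[simp]: "lin f 0 = 0"
  by (simp add: lin_def)
lemma lin_bas[simp]: "lin f (bas a) = f a"
  by (simp add: lin_def bas_def)
lemma lin_add: "lin f (u + v) = lin f u + lin f v"
proof -
  have A: "finite (Poly_Mapping.keys u \<union> Poly_Mapping.keys v)" by simp
  have "lin f (u + v) = (\<Sum>a\<in>Poly_Mapping.keys u \<union> Poly_Mapping.keys v. smult (Poly_Mapping.lookup (u+v) a) (f a))"
    by (rule lin_alt[OF A]) (simp add: keys_add)
  also have "\<dots> = (\<Sum>a\<in>Poly_Mapping.keys u \<union> Poly_Mapping.keys v. smult (Poly_Mapping.lookup u a) (f a)) + (\<Sum>a\<in>Poly_Mapping.keys u \<union> Poly_Mapping.keys v. smult (Poly_Mapping.lookup v a) (f a))"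
    by (simp add: lookup_add smult_add_left sum.distrib)
  also have "\<dots> = lin f u + lin f v"
    by (simp add: lin_alt[OF A])
  finally show ?thesis .
qed
lemma lin_smult: "lin f (smult c v) = smult c (lin f v)"
proof -
  have "lin f (smult c v) = (\<Sum>a\<in>Poly_Mapping.keys v. smult (Poly_Mapping.lookup (smult c v) a) (f a))"
    by (rule lin_alt) (auto simp: keys_smult)
  also have "\<dots> = smult c (lin f v)"
    by (simp add: lin_def smult_sum)
  finally show ?thesis .
qed
lemma lin_minus: "lin f (- v) = - lin f v"
proof -
  have "lin f (- v) + lin f v = 0" by (simp add: lin_add[symmetric])
  then show ?thesis by (simp add: eq_neg_iff_add_eq_0)
qed
lemma lin_diff: "lin f (u - v) = lin f u - lin f v"
  using lin_add[of f u "- v"] by (simp add: lin_minus)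
lemma lin_sum: "lin f (sum g A) = (\<Sum>a\<in>A. lin f (g a))"
  by (induction A rule: infinite_finite_induct) (auto simp: lin_add)
lemma lin_sum_list: "lin f (sum_list xs) = sum_list (map (lin f) xs)"
proof (induction xs)
  case (Cons x xs)
  have "lin f (sum_list (x # xs)) = lin f x + lin f (sum_list xs)" by (simp add: lin_add)
  then show ?case using Cons by simp
qed simp
lemma lin_cong: "(\<And>a. a \<in> Poly_Mapping.keys v \<Longrightarrow> f a = g a) \<Longrightarrow> lin f v = lin g v"
  by (simp add: lin_def)
lemma keys_lin: "Poly_Mapping.keys (lin f v) \<subseteq> (\<Union>a\<in>Poly_Mapping.keys v. Poly_Mapping.keys (f a))"
proof -
  have "Poly_Mapping.keys (lin f v) \<subseteq> (\<Union>a\<in>Poly_Mapping.keys v. Poly_Mapping.keys (smult (Poly_Mapping.lookup v a) (f a)))"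
    unfolding lin_def by (rule Poly_Mapping.keys_sum)
  also have "\<dots> \<subseteq> (\<Union>a\<in>Poly_Mapping.keys v. Poly_Mapping.keys (f a))"
    by (intro UN_mono subset_refl keys_smult)
  finally show ?thesis .
qed
lemma lin_fun_add: "lin (\<lambda>a. f a + g a) v = lin f v + lin g v"
  by (simp add: lin_def smult_add_right sum.distrib)
lemma lin_fun_smult: "lin (\<lambda>a. smult c (f a)) v = smult c (lin f v)"
  by (simp add: lin_def smult_sum mult.commute)
lemma lin_fun_zero[simp]: "lin (\<lambda>a. 0) v = 0"
  by (simp add: lin_def)
lemma lin_fun_minus: "lin (\<lambda>a. - f a) v = - lin f v"
proof -
  have "lin (\<lambda>a. - f a) v + lin f v = 0" by (simp add: lin_fun_add[symmetric])
  then show ?thesis by (simp add: eq_neg_iff_add_eq_0)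
qed
lemma lin_fun_diff: "lin (\<lambda>a. f a - g a) v = lin f v - lin g v"
  using lin_fun_add[of f "\<lambda>a. - g a" v] by (simp add: lin_fun_minus)

lemma vec_expansion: "v = (\<Sum>a\<in>Poly_Mapping.keys v. smult (Poly_Mapping.lookup v a) (bas a))"
proof -
  have *: "finite I \<Longrightarrow> Poly_Mapping.lookup (\<Sum>a\<in>I. smult (Poly_Mapping.lookup v a) (bas a)) j = (if j \<in> I then Poly_Mapping.lookup v j else 0)" for I j
    by (induction I rule: finite_induct) (auto simp: lookup_add bas_def lookup_single when_def)
  show ?thesis by (rule poly_mapping_eqI) (auto simp: * in_keys_iff)
qed
lemma lin_bas_id[simp]: "lin bas v = v"
  using vec_expansion[of v] by (simp add: lin_def)

lemma vec_induct[case_names zero single add]: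
  assumes "P 0" "\<And>c a. P (smult c (bas a))" "\<And>u v. P u \<Longrightarrow> P v \<Longrightarrow> P (u + v)"
  shows "P v"
proof -
  have "P (\<Sum>a\<in>I. smult (Poly_Mapping.lookup v a) (bas a))" if "finite I" for I
    using that
  proof (induction I rule: finite_induct)
    case empty
    then show ?case using assms(1) by simp
  next
    case (insert x F)
    then show ?case using assms(3)[OF assms(2)] by simp
  qed
  then have "P (\<Sum>a\<in>Poly_Mapping.keys v. smult (Poly_Mapping.lookup v a) (bas a))" by simp
  then show ?thesis using vec_expansion[of v] by simp
qed

lemma lin_compose: "lin g (lin f v) = lin (\<lambda>a. lin g (f a)) v"
  by (induction v rule: vec_induct) (auto simp: lin_add lin_smult)

lemma lin_ext:
  assumes "\<And>u v. L (u + v) = L u + L v" "\<And>c v. L (smult c v) = smult c (L v)"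
  shows "L v = lin (\<lambda>a. L (bas a)) v"
proof -
  have L0: "L 0 = 0" using assms(1)[of 0 0] by simp
  show ?thesis
    by (induction v rule: vec_induct) (auto simp: L0 assms lin_add lin_smult)
qed

lemma lin_eqI:
  assumes "\<And>u v. L (u + v) = L u + L v" "\<And>c v. L (smult c v) = smult c (L v)"
    "\<And>u v. M (u + v) = M u + M v" "\<And>c v. M (smult c v) = smult c (M v)"
    "\<And>a. L (bas a) = M (bas a)"
  shows "L v = M v"
  using lin_ext[of L v] lin_ext[of M v] assms by simp

lemma bilin_bas[simp]: "bilin f (bas a) (bas b) = f a b"
  by (simp add: bilin_def)
lemma bilin_bas_left: "bilin f (bas a) v = lin (f a) v"
  by (simp add: bilin_def)
lemma bilin_add_left: "bilin f (u + u') v = bilin f u v + bilin f u' v"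
  by (simp add: bilin_def lin_add)
lemma bilin_add_right: "bilin f u (v + v') = bilin f u v + bilin f u v'"
  by (simp add: bilin_def lin_add lin_fun_add)
lemma bilin_smult_left: "bilin f (smult c u) v = smult c (bilin f u v)"
  by (simp add: bilin_def lin_smult)
lemma bilin_smult_right: "bilin f u (smult c v) = smult c (bilin f u v)"
  by (simp add: bilin_def lin_smult lin_fun_smult)
lemma bilin_zero_left[simp]: "bilin f 0 v = 0"
  by (simp add: bilin_def)
lemma bilin_zero_right[simp]: "bilin f u 0 = 0"
  by (simp add: bilin_def)
lemma bilin_minus_left: "bilin f (- u) v = - bilin f u v"
  by (simp add: bilin_def lin_minus)
lemma bilin_minus_right: "bilin f u (- v) = - bilin f u v"
  by (simp add: bilin_def lin_minus lin_fun_minus)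
lemma bilin_diff_left: "bilin f (u - u') v = bilin f u v - bilin f u' v"
  by (simp add: bilin_def lin_diff)
lemma bilin_diff_right: "bilin f u (v - v') = bilin f u v - bilin f u v'"
  by (simp add: bilin_def lin_diff lin_fun_diff)
lemma bilin_bas_right: "bilin f u (bas b) = lin (\<lambda>a. f a b) u"
  by (simp add: bilin_def)
lemma bilin_swap: "bilin f u v = lin (\<lambda>b. lin (\<lambda>a. f a b) u) v"
  by (induction u rule: vec_induct)
     (auto simp: bilin_add_left bilin_smult_left lin_fun_add lin_fun_smult bilin_bas_left lin_add lin_smult)
lemma bilin_sum_left: "bilin f (sum g A) v = (\<Sum>a\<in>A. bilin f (g a) v)"
  by (simp add: bilin_def lin_sum)
lemma bilin_sum_right: "bilin f u (sum g A) = (\<Sum>a\<in>A. bilin f u (g a))"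
  by (induction A rule: infinite_finite_induct) (auto simp: bilin_add_right)
lemma bilin_sum_list_left: "bilin f (sum_list xs) v = sum_list (map (\<lambda>x. bilin f x v) xs)"
  by (induction xs) (auto simp: bilin_add_left)
lemma bilin_sum_list_right: "bilin f u (sum_list xs) = sum_list (map (\<lambda>x. bilin f u x) xs)"
  by (induction xs) (auto simp: bilin_add_right)
lemma bilin_cong: "(\<And>a b. a \<in> Poly_Mapping.keys u \<Longrightarrow> b \<in> Poly_Mapping.keys v \<Longrightarrow> f a b = g a b) \<Longrightarrow> bilin f u v = bilin g u v"
  unfolding bilin_def by (intro lin_cong) auto
lemma keys_bilin: "Poly_Mapping.keys (bilin f u v) \<subseteq> (\<Union>a\<in>Poly_Mapping.keys u. \<Union>b\<in>Poly_Mapping.keys v. Poly_Mapping.keys (f a b))"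
proof -
  have "Poly_Mapping.keys (bilin f u v) \<subseteq> (\<Union>a\<in>Poly_Mapping.keys u. Poly_Mapping.keys (lin (f a) v))"
    unfolding bilin_def by (rule keys_lin)
  also have "\<dots> \<subseteq> (\<Union>a\<in>Poly_Mapping.keys u. \<Union>b\<in>Poly_Mapping.keys v. Poly_Mapping.keys (f a b))"
    by (intro UN_mono subset_refl keys_lin)
  finally show ?thesis .
qed

lemma lin_bilin_left: "lin h (bilin f u v) = bilin (\<lambda>a b. lin h (f a b)) u v"
  by (simp add: bilin_def lin_compose)

lemma sum_list_concat_map:
  "sum_list (map f (concat (map g xs))) = sum_list (map (\<lambda>x. sum_list (map f (g x))) xs)"
  by (induction xs) auto


lemma bilin_lin_left: "bilin f (lin g x) w = lin (\<lambda>a. bilin f (g a) w) x"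
  by (simp add: bilin_def lin_compose)
lemma bilin_lin_right: "bilin f w (lin h y) = lin (\<lambda>b. bilin f w (h b)) y"
  by (simp add: bilin_swap[of f w] lin_compose)

abbreviation mul :: "'k::comm_ring_1 \<Rightarrow> ('x forest \<Rightarrow>\<^sub>0 'k) \<Rightarrow> ('x forest \<Rightarrow>\<^sub>0 'k) \<Rightarrow> ('x forest \<Rightarrow>\<^sub>0 'k)"
  where "mul lam \<equiv> bilin (fprod lam)"
abbreviation tm :: "'k::comm_ring_1 \<Rightarrow> ('x tree \<Rightarrow>\<^sub>0 'k) \<Rightarrow> ('x tree \<Rightarrow>\<^sub>0 'k) \<Rightarrow> ('x tree \<Rightarrow>\<^sub>0 'k)"
  where "tm lam \<equiv> bilin (tprod lam)"

definition PP :: "('x forest \<Rightarrow>\<^sub>0 'k::comm_ring_1) \<Rightarrow> ('x tree \<Rightarrow>\<^sub>0 'k)" where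
  "PP u = lin (\<lambda>F. bas (Node F)) u"

lemma PP_bas[simp]: "PP (bas F) = bas (Node F)" by (simp add: PP_def)
lemma PP_add[simp]: "PP (u + v) = PP u + PP v" by (simp add: PP_def lin_add)
lemma PP_smult[simp]: "PP (smult c u) = smult c (PP u)" by (simp add: PP_def lin_smult)
lemma PP_zero[simp]: "PP 0 = 0" by (simp add: PP_def)
lemma AF_bas[simp]: "as_forest (bas T) = bas (Forest T [])" by (simp add: as_forest_def)
lemma AF_add[simp]: "as_forest (u + v) = as_forest u + as_forest v" by (simp add: as_forest_def lin_add)
lemma AF_smult[simp]: "as_forest (smult c u) = smult c (as_forest u)" by (simp add: as_forest_def lin_smult)
lemma AF_zero[simp]: "as_forest 0 = 0" by (simp add: as_forest_def)

lemmas bilin_simps[simp] = bilin_add_left bilin_add_right bilin_smult_left bilin_smult_right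
lemmas smult_simps[simp] = smult_add_right

lemma join_single_right: "join F (Forest g []) T = set_last F T"
  by (cases F) auto
lemma join_single_left: "join (Forest t []) G T = set_first G T"
  by (cases G) auto
lemma flast_set_last[simp]: "flast (set_last F T) = T"
  by (cases F) auto
lemma ffirst_set_first[simp]: "ffirst (set_first F T) = T"
  by (cases F) auto
lemma join_set_last[simp]: "join (set_last F T) H T' = join F H T'"
  by (cases F; cases H) auto
lemma join_set_first[simp]: "join F (set_first H T) T' = join F H T'"
  by (cases F; cases H) auto
lemma flast_join_multi: "qs \<noteq> [] \<Longrightarrow> flast (join F (Forest g qs) T) = flast (Forest g qs)"
  by (cases F) auto
lemma ffirst_join_multi: "ps \<noteq> [] \<Longrightarrow> ffirst (join (Forest t ps) G T) = t"
  by (cases G) auto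
lemma join_assoc_multi: "qs \<noteq> [] \<Longrightarrow> join (join F (Forest g qs) T) H T' = join F (join (Forest g qs) H T') T"
  by (cases F; cases H) (auto simp: butlast_append)

lemma size_flast_less: "size (flast F) < size F"
proof (cases F)
  case (Forest t ps)
  show ?thesis
  proof (cases "ps = []")
    case False
    then have "last ps \<in> set ps" by simp
    moreover obtain a b where "last ps = (a, b)" by (cases "last ps")
    ultimately have "size b \<le> size_list (size_prod (\<lambda>_. 0) size) ps"
      by (intro size_list_estimation'[of "(a, b)"]) auto
    then show ?thesis using Forest False \<open>last ps = (a, b)\<close> by simp
  qed (simp add: Forest)
qed
lemma size_ffirst_less: "size (ffirst F) < size F"
  by (cases F) auto

lemma tprod_Leaf_right[simp]: "tprod lam T Leaf = bas T"
  by (cases T) auto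
lemma tm_Leaf_left[simp]: "tm lam (bas Leaf) x = x"
proof -
  have h: "tprod lam Leaf = bas" by (rule ext) simp
  show ?thesis by (simp only: h bilin_bas_left lin_bas_id)
qed
lemma lin_tprod_Leaf[simp]: "lin (tprod lam Leaf) x = x"
  using tm_Leaf_left[of lam x] by (simp only: bilin_bas_left)
lemma tm_Leaf_right[simp]: "tm lam x (bas Leaf) = x"
  by (simp add: bilin_bas_right)

lemma RB_bas:
  "tprod lam (Node F) (Node G) = PP (mul lam (as_forest (bas (Node F))) (bas G))
     + PP (mul lam (bas F) (as_forest (bas (Node G)))) + smult lam (PP (mul lam (bas F) (bas G)))"
  by (simp add: fprod_def PP_def lin_compose join_single_left join_single_right)

declare tprod.simps(3)[simp del]

lemma RB:
  "tm lam (PP u) (PP v) = PP (mul lam (as_forest (PP u)) v)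
     + PP (mul lam u (as_forest (PP v))) + smult lam (PP (mul lam u v))"
proof (induction u rule: vec_induct)
  case (single c a)
  show ?case
  proof (induction v rule: vec_induct)
    case (single d b)
    then show ?case by (simp add: RB_bas smult_add_right mult_ac)
  next
    case (add v w)
    then show ?case by (simp add: smult_add_right algebra_simps)
  qed simp
next
  case (add u v)
  then show ?case by (simp add: smult_add_right algebra_simps)
qed simp

lemma AF_tm: "as_forest (tm lam x y) = mul lam (as_forest x) (as_forest y)"
proof -
  have "as_forest (tm lam x y) = bilin (\<lambda>a b. as_forest (tprod lam a b)) x y"
    by (simp add: as_forest_def lin_bilin_left)
  also have "\<dots> = bilin (\<lambda>a b. fprod lam (Forest a []) (Forest b [])) x y"
    by (rule bilin_cong) (simp add: fprod_def as_forest_def)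
  also have "\<dots> = mul lam (as_forest x) (as_forest y)"
    by (simp add: as_forest_def bilin_def lin_compose)
  finally show ?thesis .
qed


definition FA :: "'k::comm_ring_1 \<Rightarrow> 'x forest \<Rightarrow> 'x forest \<Rightarrow> 'x forest \<Rightarrow> bool" where
  "FA lam F G H \<longleftrightarrow> mul lam (fprod lam F G) (bas H) = mul lam (bas F) (fprod lam G H)"
definition TA :: "'k::comm_ring_1 \<Rightarrow> 'x tree \<Rightarrow> 'x tree \<Rightarrow> 'x tree \<Rightarrow> bool" where
  "TA lam f g h \<longleftrightarrow> tm lam (tprod lam f g) (bas h) = tm lam (bas f) (tprod lam g h)"

lemma FA_multi:
  assumes "qs \<noteq> []"
  shows "FA lam F (Forest g qs) H"
proof -
  let ?G = "Forest g qs"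
  let ?X = "tprod lam (flast F) g"
  let ?Y = "tprod lam (flast ?G) (ffirst H)"
  have "mul lam (fprod lam F ?G) (bas H) = lin (\<lambda>T. fprod lam (join F ?G T) H) ?X"
    by (simp add: fprod_def bilin_lin_left)
  also have "\<dots> = lin (\<lambda>T. lin (\<lambda>T'. bas (join F (join ?G H T') T)) ?Y) ?X"
    by (rule lin_cong) (simp add: fprod_def flast_join_multi[OF assms] join_assoc_multi[OF assms])
  also have "\<dots> = lin (\<lambda>T'. lin (\<lambda>T. bas (join F (join ?G H T') T)) ?X) ?Y"
    using bilin_swap[of "\<lambda>T T'. bas (join F (join ?G H T') T)" ?X ?Y] by (simp add: bilin_def)
  also have "\<dots> = mul lam (bas F) (fprod lam ?G H)"
    by (simp add: fprod_def bilin_lin_right bilin_bas_left ffirst_join_multi[OF assms])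
  finally show ?thesis by (simp add: FA_def)
qed

lemma FA_single:
  assumes "TA lam (flast F) g (ffirst H)"
  shows "FA lam F (Forest g []) H"
proof -
  let ?K = "\<lambda>T'. bas (join F H T')"
  have "mul lam (fprod lam F (Forest g [])) (bas H) = lin (\<lambda>T. lin ?K (tprod lam T (ffirst H))) (tprod lam (flast F) g)"
    by (simp add: fprod_def bilin_lin_left join_single_right)
  also have "\<dots> = lin ?K (tm lam (tprod lam (flast F) g) (bas (ffirst H)))"
    by (simp add: lin_compose bilin_bas_right)
  also have "\<dots> = lin ?K (tm lam (bas (flast F)) (tprod lam g (ffirst H)))"
    using assms by (simp add: TA_def)
  also have "\<dots> = lin (\<lambda>T. lin ?K (tprod lam (flast F) T)) (tprod lam g (ffirst H))"
    by (simp add: lin_compose bilin_bas_left)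
  also have "\<dots> = mul lam (bas F) (fprod lam (Forest g []) H)"
    by (simp add: fprod_def bilin_lin_right join_single_left)
  finally show ?thesis by (simp add: FA_def)
qed

lemma TA_Leaf: "f = Leaf \<or> g = Leaf \<or> h = Leaf \<Longrightarrow> TA lam f g h"
  by (auto simp: TA_def bilin_bas_left)

lemma size_AF_Node: "size (Forest (Node a) []) = size a + 2"
  by simp

lemma TA_Node:
  fixes lam :: "'k::comm_ring_1" and a b c :: "'x forest"
  assumes IH: "\<And>F G H :: 'x forest. size F + size G + size H < size a + size b + size c + 6 \<Longrightarrow> FA lam F G H"
  shows "TA lam (Node a) (Node b) (Node c)"
proof -
  let ?pa = "bas (Forest (Node a) []) :: ('x forest \<Rightarrow>\<^sub>0 'k)"
  let ?pb = "bas (Forest (Node b) []) :: ('x forest \<Rightarrow>\<^sub>0 'k)"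
  let ?pc = "bas (Forest (Node c) []) :: ('x forest \<Rightarrow>\<^sub>0 'k)"
  have A: "\<And>F G H :: 'x forest. size F + size G + size H < size a + size b + size c + 6 \<Longrightarrow>
      mul lam (fprod lam F G) (bas H) = mul lam (bas F) (fprod lam G H)"
    using IH by (simp add: FA_def)
  have RBb: "tprod lam (Node x) (Node y) = PP (fprod lam (Forest (Node x) []) y)
     + PP (fprod lam x (Forest (Node y) [])) + smult lam (PP (fprod lam x y))" for x y :: "'x forest"
    using RB_bas[of lam x y] by simp
  have AFt: "as_forest (tprod lam (Node x) (Node y)) = fprod lam (Forest (Node x) []) (Forest (Node y) [])" for x y :: "'x forest"
    using AF_tm[of lam "bas (Node x)" "bas (Node y)"] by simp
  define w where "w = fprod lam (Forest (Node a) []) b + fprod lam a (Forest (Node b) []) + smult lam (fprod lam a b)"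
  define v where "v = fprod lam (Forest (Node b) []) c + fprod lam b (Forest (Node c) []) + smult lam (fprod lam b c)"
  have w: "tprod lam (Node a) (Node b) = PP w" by (simp only: RBb w_def PP_add PP_smult)
  have v: "tprod lam (Node b) (Node c) = PP v" by (simp only: RBb v_def PP_add PP_smult)
  have L: "tm lam (tprod lam (Node a) (Node b)) (bas (Node c)) =
     PP (mul lam (fprod lam (Forest (Node a) []) (Forest (Node b) [])) (bas c)
       + mul lam w ?pc + smult lam (mul lam w (bas c)))"
  proof -
    have "tm lam (tprod lam (Node a) (Node b)) (bas (Node c)) = tm lam (PP w) (PP (bas c))"
      by (simp only: w PP_bas)
    also have "\<dots> = PP (mul lam (as_forest (PP w)) (bas c)) + PP (mul lam w (as_forest (PP (bas c))))
        + smult lam (PP (mul lam w (bas c)))" by (rule RB)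
    also have "as_forest (PP w) = fprod lam (Forest (Node a) []) (Forest (Node b) [])"
      using AFt[of a b] w by simp
    finally show ?thesis by simp
  qed
  have R: "tm lam (bas (Node a)) (tprod lam (Node b) (Node c)) =
     PP (mul lam ?pa v + mul lam (bas a) (fprod lam (Forest (Node b) []) (Forest (Node c) []))
       + smult lam (mul lam (bas a) v))"
  proof -
    have "tm lam (bas (Node a)) (tprod lam (Node b) (Node c)) = tm lam (PP (bas a)) (PP v)"
      by (simp only: v PP_bas)
    also have "\<dots> = PP (mul lam (as_forest (PP (bas a))) v) + PP (mul lam (bas a) (as_forest (PP v)))
        + smult lam (PP (mul lam (bas a) v))" by (rule RB)
    also have "as_forest (PP v) = fprod lam (Forest (Node b) []) (Forest (Node c) [])"
      using AFt[of b c] v by simp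
    finally show ?thesis by simp
  qed
  have e1: "mul lam (fprod lam (Forest (Node a) []) (Forest (Node b) [])) (bas c) = mul lam ?pa (fprod lam (Forest (Node b) []) c)"
    by (rule A) simp
  have e2: "mul lam (fprod lam (Forest (Node a) []) b) ?pc = mul lam ?pa (fprod lam b (Forest (Node c) []))"
    by (rule A) simp
  have e3: "mul lam (fprod lam a (Forest (Node b) [])) ?pc = mul lam (bas a) (fprod lam (Forest (Node b) []) (Forest (Node c) []))"
    by (rule A) simp
  have e4: "mul lam (fprod lam a b) ?pc = mul lam (bas a) (fprod lam b (Forest (Node c) []))"
    by (rule A) simp
  have e5: "mul lam (fprod lam (Forest (Node a) []) b) (bas c) = mul lam ?pa (fprod lam b c)"
    by (rule A) simp
  have e6: "mul lam (fprod lam a (Forest (Node b) [])) (bas c) = mul lam (bas a) (fprod lam (Forest (Node b) []) c)"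
    by (rule A) simp
  have e7: "mul lam (fprod lam a b) (bas c) = mul lam (bas a) (fprod lam b c)"
    by (rule A) simp
  show ?thesis
    unfolding TA_def L R w_def v_def
    by (simp add: e1 e2 e3 e4 e5 e6 e7 algebra_simps)
qed

lemma assoc_bas: "FA lam F G H"
proof (induction "size F + size G + size H" arbitrary: F G H rule: less_induct)
  case less
  obtain g qs where G: "G = Forest g qs" by (cases G)
  show ?case
  proof (cases "qs = []")
    case False
    then show ?thesis using G FA_multi by simp
  next
    case True
    have "TA lam (flast F) g (ffirst H)"
    proof (cases "flast F = Leaf \<or> g = Leaf \<or> ffirst H = Leaf")
      case True
      then show ?thesis by (rule TA_Leaf)
    next
      case False
      then obtain a b c where abc: "flast F = Node a" "g = Node b" "ffirst H = Node c"
        by (metis tree.exhaust)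
      have s: "size a + size b + size c + 6 \<le> size F + size G + size H"
        using size_flast_less[of F] size_ffirst_less[of H] abc G True by simp
      show ?thesis unfolding abc
        by (rule TA_Node) (rule less; use s in simp)
    qed
    then show ?thesis using G True FA_single by simp
  qed
qed

lemma mul_assoc: "mul lam (mul lam u v) w = mul lam u (mul lam v w)"
proof (induction u rule: vec_induct)
  case (single c a)
  show ?case
  proof (induction v rule: vec_induct)
    case (single d b)
    show ?case
    proof (induction w rule: vec_induct)
      case (single e h)
      show ?case using assoc_bas[of lam a b h] by (simp add: FA_def mult_ac)
    qed simp_all
  qed simp_all
qed simp_all


lemma set_last_flast[simp]: "set_last F (flast F) = F"
  by (cases F) auto

lemma fprod_dot_left[simp]: "fprod lam dot G = bas G"
  by (cases G) (simp add: fprod_def dot_def)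
lemma fprod_dot_right[simp]: "fprod lam F dot = bas F"
  by (simp add: fprod_def dot_def join_single_right)
lemma mul_dot_left[simp]: "mul lam (bas dot) u = u"
proof -
  have h: "fprod lam dot = bas" by (rule ext) simp
  show ?thesis by (simp only: h bilin_bas_left lin_bas_id)
qed
lemma mul_dot_right[simp]: "mul lam u (bas dot) = u"
  by (simp add: bilin_bas_right)

lemma keys_bas[simp]: "Poly_Mapping.keys (bas a :: 'a \<Rightarrow>\<^sub>0 'k::comm_ring_1) = {a}"
  by (simp add: bas_def)
lemma lookup_bas: "Poly_Mapping.lookup (bas a) b = (if a = b then 1 else 0)"
  by (simp add: bas_def lookup_single when_def)

lemma keys_lin_subset: "(\<And>a. a \<in> Poly_Mapping.keys v \<Longrightarrow> Poly_Mapping.keys (f a) \<subseteq> S) \<Longrightarrow> Poly_Mapping.keys (lin f v) \<subseteq> S"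
  using keys_lin[of f v] by blast
lemma keys_add_subset: "Poly_Mapping.keys u \<subseteq> S \<Longrightarrow> Poly_Mapping.keys v \<subseteq> S \<Longrightarrow> Poly_Mapping.keys (u + v) \<subseteq> S"
  using Poly_Mapping.keys_add[of u v] by blast
lemma keys_smult_subset: "Poly_Mapping.keys v \<subseteq> S \<Longrightarrow> Poly_Mapping.keys (smult c v) \<subseteq> S"
  using keys_smult[of c v] by blast

lemma keys_tprod_Node: "Poly_Mapping.keys (tprod lam (Node F) (Node G)) \<subseteq> range Node"
  by (simp only: tprod.simps) (intro keys_add_subset keys_smult_subset keys_lin_subset; simp)

lemma lin_scalar_counit: "lin_scalar counit_a v = Poly_Mapping.lookup v dot"
proof -
  have "lin_scalar counit_a v = (\<Sum>a\<in>Poly_Mapping.keys v. if a = dot then Poly_Mapping.lookup v a else 0)"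
    unfolding lin_scalar_def counit_a_def by (rule sum.cong) auto
  also have "\<dots> = Poly_Mapping.lookup v dot"
    by (simp add: sum.delta in_keys_iff)
  finally show ?thesis .
qed

lemma counit_mult: "lin_scalar counit_a (fprod lam a b) = counit_a a * counit_a b"
proof (cases "a = dot \<or> b = dot")
  case True
  then show ?thesis by (auto simp: lin_scalar_counit lookup_bas counit_a_def)
next
  case False
  have "dot \<notin> Poly_Mapping.keys (fprod lam a b)"
  proof
    assume "dot \<in> Poly_Mapping.keys (fprod lam a b)"
    then obtain T where T: "T \<in> Poly_Mapping.keys (tprod lam (flast a) (ffirst b))" "join a b T = dot"
      unfolding fprod_def using keys_lin[of "\<lambda>T. bas (join a b T)"] by fastforce
    obtain t ps t' qs where ab: "a = Forest t ps" "b = Forest t' qs" by (cases a; cases b)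
    with T(2) have "ps = []" "qs = []" "T = Leaf"
      by (auto simp: dot_def split: if_splits)
    with False ab have "t \<noteq> Leaf" "t' \<noteq> Leaf" by (auto simp: dot_def)
    then obtain F G where "t = Node F" "t' = Node G" by (metis tree.exhaust)
    with T(1) keys_tprod_Node[of lam F G] ab \<open>ps = []\<close> \<open>qs = []\<close> \<open>T = Leaf\<close> show False by auto
  qed
  then show ?thesis using False by (simp add: lin_scalar_counit counit_a_def in_keys_iff)
qed


abbreviation tmul :: "'k::comm_ring_1 \<Rightarrow> ('x forest \<times> 'x forest \<Rightarrow>\<^sub>0 'k) \<Rightarrow> ('x forest \<times> 'x forest \<Rightarrow>\<^sub>0 'k) \<Rightarrow> ('x forest \<times> 'x forest \<Rightarrow>\<^sub>0 'k)"
  where "tmul lam \<equiv> bilin (\<lambda>(x, y) (x', y'). tensor (fprod lam x x') (fprod lam y y'))"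

lemma tensor_bas[simp]: "tensor (bas a) (bas b) = bas (a, b)"
  by (simp add: tensor_def)
lemma tensor_add_left[simp]: "tensor (u + u') v = tensor u v + tensor u' v"
  by (simp add: tensor_def)
lemma tensor_add_right[simp]: "tensor u (v + v') = tensor u v + tensor u v'"
  by (simp add: tensor_def)
lemma tensor_smult_left[simp]: "tensor (smult c u) v = smult c (tensor u v)"
  by (simp add: tensor_def)
lemma tensor_smult_right[simp]: "tensor u (smult c v) = smult c (tensor u v)"
  by (simp add: tensor_def)
lemma tensor_zero_left[simp]: "tensor 0 v = 0"
  by (simp add: tensor_def)
lemma tensor_zero_right[simp]: "tensor u 0 = 0"
  by (simp add: tensor_def)
lemma tensor_sum_list_left: "tensor (sum_list xs) v = sum_list (map (\<lambda>x. tensor x v) xs)"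
  by (induction xs) simp_all
lemma tensor_sum_list_right: "tensor u (sum_list xs) = sum_list (map (\<lambda>x. tensor u x) xs)"
  by (induction xs) simp_all

lemma tmul_bas[simp]: "tmul lam (bas (x, y)) (bas (x', y')) = tensor (fprod lam x x') (fprod lam y y')"
  by simp

lemma tmul_tensor: "tmul lam (tensor a b) (tensor c d) = tensor (mul lam a c) (mul lam b d)"
proof (induction a rule: vec_induct)
  case (single c1 a1)
  show ?case
  proof (induction b rule: vec_induct)
    case (single c2 a2)
    show ?case
    proof (induction c rule: vec_induct)
      case (single c3 a3)
      show ?case
        by (induction d rule: vec_induct) (simp_all add: mult_ac)
    qed simp_all
  qed simp_all
qed simp_all

lemma tmul_assoc: "tmul lam (tmul lam U V) W = tmul lam U (tmul lam V W)"
proof (induction U rule: vec_induct)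
  case (single c1 p)
  show ?case
  proof (induction V rule: vec_induct)
    case (single c2 q)
    show ?case
    proof (induction W rule: vec_induct)
      case (single c3 r)
      obtain x y where p: "p = (x, y)" by (cases p)
      obtain x' y' where q: "q = (x', y')" by (cases q)
      obtain x'' y'' where r: "r = (x'', y'')" by (cases r)
      have "tmul lam (tmul lam (bas p) (bas q)) (bas r) = tmul lam (bas p) (tmul lam (bas q) (bas r))"
        unfolding p q r tmul_bas
        using tmul_tensor[of lam "fprod lam x x'" "fprod lam y y'" "bas x''" "bas y''"]
          tmul_tensor[of lam "bas x" "bas y" "fprod lam x' x''" "fprod lam y' y''"]
          mul_assoc[of lam "bas x" "bas x'" "bas x''"] mul_assoc[of lam "bas y" "bas y'" "bas y''"]
        by simp
      then show ?case by (simp add: mult_ac)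
    qed simp_all
  qed simp_all
qed simp_all

lemma tmul_unit_left[simp]: "tmul lam (bas (dot, dot)) U = U"
proof (induction U rule: vec_induct)
  case (single c p)
  then show ?case by (cases p) simp
qed simp_all

lemma tmul_unit_right[simp]: "tmul lam U (bas (dot, dot)) = U"
proof (induction U rule: vec_induct)
  case (single c p)
  then show ?case by (cases p) simp
qed simp_all

lemma closure_foldl: "closure lam H = foldl (\<lambda>acc p. mul lam acc (hat p)) (bas dot) H"
  by (cases H) (simp_all add: closure_def)

lemma foldl_mul_acc: "foldl (\<lambda>acc p. mul lam acc (hat p)) acc H = mul lam acc (foldl (\<lambda>acc p. mul lam acc (hat p)) (bas dot) H)"
proof (induction H arbitrary: acc)
  case (Cons h H)
  show ?case
    using Cons[of "mul lam acc (hat h)"] Cons[of "hat h"] by (simp add: mul_assoc)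
qed simp

lemma closure_append: "closure lam (H @ H') = mul lam (closure lam H) (closure lam H')"
  by (simp add: closure_foldl foldl_mul_acc[of lam "foldl _ _ H"])

lemma closure_Nil[simp]: "closure lam [] = bas dot"
  by (simp add: closure_def)
lemma closure_single[simp]: "closure lam [p] = hat p"
  by (simp add: closure_def)

lemma eval_ps_acc: "eval_ps lam acc qs = mul lam acc (eval_ps lam (bas dot) qs)"
proof (induction qs arbitrary: acc)
  case (Cons sq qs)
  obtain s q where sq: "sq = (s, q)" by (cases sq)
  show ?case
    using Cons[of "mul lam (mul lam acc (cdec s)) (as_forest (eval_t lam q))"]
      Cons[of "mul lam (cdec s) (as_forest (eval_t lam q))"]
    by (simp add: sq mul_assoc)
qed simp


definition Lop :: "('x forest \<times> 'x forest \<Rightarrow>\<^sub>0 'k::comm_ring_1) \<Rightarrow> ('x forest \<times> 'x forest \<Rightarrow>\<^sub>0 'k)" where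
  "Lop U = lin (\<lambda>(a, b). bas (a, Forest (Node b) [])) U"

lemma Lop_bas[simp]: "Lop (bas (a, b)) = bas (a, Forest (Node b) [])" by (simp add: Lop_def)
lemma Lop_add[simp]: "Lop (U + V) = Lop U + Lop V" by (simp add: Lop_def lin_add)
lemma Lop_smult[simp]: "Lop (smult c U) = smult c (Lop U)" by (simp add: Lop_def lin_smult)
lemma Lop_zero[simp]: "Lop 0 = 0" by (simp add: Lop_def)
lemma Lop_sum_list: "Lop (sum_list xs) = sum_list (map Lop xs)"
  by (induction xs) simp_all

lemma tensor_AF_PP: "tensor a (as_forest (PP b)) = Lop (tensor a b)"
proof (induction a rule: vec_induct)
  case (single c x)
  show ?case by (induction b rule: vec_induct) simp_all
qed simp_all

definition cx :: "'x \<Rightarrow> ('x forest \<Rightarrow>\<^sub>0 'k::comm_ring_1)" where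
  "cx x = bas (Forest Leaf [(x, Leaf)])"
definition Dx :: "'x \<Rightarrow> ('x forest \<times> 'x forest \<Rightarrow>\<^sub>0 'k::comm_ring_1)" where
  "Dx x = tensor (bas dot) (cx x) + tensor (cx x) (bas dot)"

definition Ct :: "'k::comm_ring_1 \<Rightarrow> 'x tree \<Rightarrow> ('x forest \<times> 'x forest \<Rightarrow>\<^sub>0 'k)" where
  "Ct lam t = sum_list (map (\<lambda>(H, q). tensor (closure lam H) (as_forest (eval_t lam q))) (choices_t t))"
definition Cps :: "'k::comm_ring_1 \<Rightarrow> ('x \<times> 'x tree) list \<Rightarrow> ('x forest \<times> 'x forest \<Rightarrow>\<^sub>0 'k)" where
  "Cps lam ps = sum_list (map (\<lambda>(H, qs). tensor (closure lam H) (eval_ps lam (bas dot) qs)) (choices_ps ps))"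

lemma sum_list_pairs:
  "sum_list (map f (concat (map (\<lambda>(a, b). map (\<lambda>(c, d). k a b c d) ys) xs)))
     = sum_list (map (\<lambda>(a, b). sum_list (map (\<lambda>(c, d). f (k a b c d)) ys)) xs)"
  by (induction xs) (auto simp: split_def o_def)

lemma sum_list_bilin_right: "sum_list (map (\<lambda>(c, d). bilin f X (g c d)) ys) = bilin f X (sum_list (map (\<lambda>(c, d). g c d) ys))"
  by (induction ys) (auto simp: bilin_add_right)
lemma sum_list_bilin_left: "sum_list (map (\<lambda>(c, d). bilin f (g c d) X) ys) = bilin f (sum_list (map (\<lambda>(c, d). g c d) ys)) X"
  by (induction ys) (auto simp: bilin_add_left)

lemma cop_forest: "coprod_a lam (Forest t ps) = tmul lam (Ct lam t) (Cps lam ps)"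
proof -
  have "coprod_a lam (Forest t ps) = sum_list (map (\<lambda>(H, q). sum_list (map (\<lambda>(H', qs).
      tensor (closure lam (H @ H')) (eval_ps lam (as_forest (eval_t lam q)) qs)) (choices_ps ps))) (choices_t t))"
    unfolding coprod_a_def choices_f.simps sum_list_pairs by simp
  also have "\<dots> = sum_list (map (\<lambda>(H, q). sum_list (map (\<lambda>(H', qs).
      tmul lam (tensor (closure lam H) (as_forest (eval_t lam q))) (tensor (closure lam H') (eval_ps lam (bas dot) qs))) (choices_ps ps))) (choices_t t))"
    by (simp add: closure_append eval_ps_acc[of lam "as_forest _"] tmul_tensor)
  also have "\<dots> = sum_list (map (\<lambda>(H, q).
      tmul lam (tensor (closure lam H) (as_forest (eval_t lam q))) (Cps lam ps)) (choices_t t))"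
    by (simp only: sum_list_bilin_right Cps_def)
  also have "\<dots> = tmul lam (Ct lam t) (Cps lam ps)"
    by (simp only: sum_list_bilin_left Ct_def)
  finally show ?thesis .
qed

lemma Forest_Leaf_Nil[simp]: "Forest Leaf [] = dot"
  by (simp add: dot_def)
lemma Cps_Nil[simp]: "Cps lam [] = bas (dot, dot)"
  by (simp add: Cps_def)
lemma Ct_Leaf[simp]: "Ct lam Leaf = bas (dot, dot)"
  by (simp add: Ct_def)
lemma Ct_eq: "Ct lam t = coprod_a lam (Forest t [])"
  by (simp add: cop_forest)
lemma Cps_eq: "Cps lam ps = coprod_a lam (Forest Leaf ps)"
  using cop_forest[of lam Leaf ps] by simp

lemma cop_forest': "coprod_a lam (Forest t ps) = tmul lam (coprod_a lam (Forest t [])) (coprod_a lam (Forest Leaf ps))"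
  using cop_forest Ct_eq Cps_eq by metis

lemma cop_dot: fixes lam :: "'k::comm_ring_1" shows "coprod_a lam (dot :: 'x forest) = bas (dot, dot)"
proof -
  have "Ct lam (Leaf :: 'x tree) = coprod_a lam (Forest Leaf [])" by (rule Ct_eq)
  then show ?thesis by (simp add: Ct_def)
qed


lemma cop_Node:
  fixes lam :: "'k::comm_ring_1" and F :: "'x forest"
  shows "coprod_a lam (Forest (Node F) []) = bas (Forest (Node F) [], dot) + Lop (coprod_a lam F)"
proof -
  have "Ct lam (Node F) = bas (Forest (Node F) [], dot)
     + sum_list (map (\<lambda>(H, q). tensor (closure lam H) (as_forest (PP (eval_f lam q)))) (choices_f F))"
    by (simp add: Ct_def hat_def PP_def o_def split_def)
  also have "\<dots> = bas (Forest (Node F) [], dot) + Lop (coprod_a lam F)"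
    by (simp add: tensor_AF_PP coprod_a_def Lop_sum_list o_def split_def)
  finally show ?thesis by (simp add: Ct_eq)
qed

lemma sum_list_triple:
  "sum_list (map f (concat (map (\<lambda>(D, s). concat (map (\<lambda>(H, q). map (\<lambda>(H', qs). k D s H q H' qs) Z) Y)) X)))
   = sum_list (map (\<lambda>(D, s). sum_list (map (\<lambda>(H, q). sum_list (map (\<lambda>(H', qs). f (k D s H q H' qs)) Z)) Y)) X)"
  by (induction X) (auto simp: split_def o_def sum_list_concat_map)

lemma cop_dec:
  fixes lam :: "'k::comm_ring_1" and x :: 'x
  shows "coprod_a lam (Forest Leaf ((x, t) # ps))
     = tmul lam (tmul lam (Dx x) (coprod_a lam (Forest t []))) (coprod_a lam (Forest Leaf ps))"
proof -
  have inner: "sum_list (map (\<lambda>(H, q). sum_list (map (\<lambda>(H', qs).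
      tensor (closure lam (D @ H @ H')) (eval_ps lam (bas dot) ((s, q) # qs))) (choices_ps ps))) (choices_t t))
    = tmul lam (tmul lam (tensor (closure lam D) (cdec s)) (Ct lam t)) (Cps lam ps)" for D s
  proof -
    have "sum_list (map (\<lambda>(H, q). sum_list (map (\<lambda>(H', qs).
      tensor (closure lam (D @ H @ H')) (eval_ps lam (bas dot) ((s, q) # qs))) (choices_ps ps))) (choices_t t))
      = sum_list (map (\<lambda>(H, q). sum_list (map (\<lambda>(H', qs).
      tmul lam (tmul lam (tensor (closure lam D) (cdec s)) (tensor (closure lam H) (as_forest (eval_t lam q))))
        (tensor (closure lam H') (eval_ps lam (bas dot) qs))) (choices_ps ps))) (choices_t t))"
      by (simp add: closure_append eval_ps_acc[of lam "mul lam _ _"] tmul_tensor mul_assoc)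
    also have "\<dots> = sum_list (map (\<lambda>(H, q).
      tmul lam (tmul lam (tensor (closure lam D) (cdec s)) (tensor (closure lam H) (as_forest (eval_t lam q))))
        (Cps lam ps)) (choices_t t))"
      by (simp only: sum_list_bilin_right Cps_def)
    also have "\<dots> = tmul lam (tmul lam (tensor (closure lam D) (cdec s)) (Ct lam t)) (Cps lam ps)"
      by (simp only: sum_list_bilin_left sum_list_bilin_right Ct_def)
    finally show ?thesis .
  qed
  have "coprod_a lam (Forest Leaf ((x, t) # ps)) = Cps lam ((x, t) # ps)"
    by (simp add: Cps_eq)
  also have "\<dots> = sum_list (map (\<lambda>(D, s). sum_list (map (\<lambda>(H, q). sum_list (map (\<lambda>(H', qs).
      tensor (closure lam (D @ H @ H')) (eval_ps lam (bas dot) ((s, q) # qs))) (choices_ps ps))) (choices_t t)))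
      [([], Some x), ([PDec x], None)])"
    unfolding Cps_def choices_ps.simps sum_list_triple by simp
  also have "\<dots> = tmul lam (tmul lam (Dx x) (Ct lam t)) (Cps lam ps)"
    by (simp only: list.map sum_list.Cons sum_list.Nil prod.case inner add_0_right)
       (simp add: Dx_def cx_def cdec_def hat_def)
  finally show ?thesis by (simp add: Ct_eq Cps_eq)
qed


definition DD :: "'k::comm_ring_1 \<Rightarrow> ('x forest \<Rightarrow>\<^sub>0 'k) \<Rightarrow> ('x forest \<times> 'x forest \<Rightarrow>\<^sub>0 'k)" where
  "DD lam u = lin (coprod_a lam) u"

lemma DD_bas[simp]: "DD lam (bas F) = coprod_a lam F" by (simp add: DD_def)
lemma DD_add[simp]: "DD lam (u + v) = DD lam u + DD lam v" by (simp add: DD_def lin_add)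
lemma DD_smult[simp]: "DD lam (smult c u) = smult c (DD lam u)" by (simp add: DD_def lin_smult)
lemma DD_zero[simp]: "DD lam 0 = 0" by (simp add: DD_def)

lemma cop_list:
  fixes lam :: "'k::comm_ring_1" and ps1 :: "('x \<times> 'x tree) list"
  shows "coprod_a lam (Forest Leaf (ps1 @ ps2)) = tmul lam (coprod_a lam (Forest Leaf ps1)) (coprod_a lam (Forest Leaf ps2))"
proof (induction ps1)
  case Nil
  then show ?case by (simp add: cop_dot)
next
  case (Cons p ps1)
  obtain x t where p: "p = (x, t)" by (cases p)
  show ?case using Cons by (simp add: p cop_dec tmul_assoc)
qed

lemma cop_join:
  fixes lam :: "'k::comm_ring_1" and A B :: "'x forest"
  shows "coprod_a lam (join A B T) = tmul lam (tmul lam (coprod_a lam (set_last A Leaf)) (coprod_a lam (Forest T []))) (coprod_a lam (set_first B Leaf))"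
proof -
  obtain a ps where A: "A = Forest a ps" by (cases A)
  obtain b qs where B: "B = Forest b qs" by (cases B)
  show ?thesis
  proof (cases "ps = []")
    case True
    then show ?thesis by (simp add: A B cop_dot cop_forest'[of lam T qs])
  next
    case False
    then obtain ps' x t where ps: "ps = ps' @ [(x, t)]" by (metis prod.exhaust rev_exhaust)
    have "coprod_a lam (join A B T) = coprod_a lam (Forest a (ps' @ [(x, T)] @ qs))"
      by (simp add: A B ps)
    also have "\<dots> = tmul lam (coprod_a lam (Forest a []))
        (tmul lam (coprod_a lam (Forest Leaf ps')) (tmul lam (tmul lam (Dx x) (coprod_a lam (Forest T []))) (coprod_a lam (Forest Leaf qs))))"
      by (simp add: cop_forest'[of lam a "ps' @ (x, T) # qs"] cop_list cop_dec cop_dot)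
    also have "coprod_a lam (set_last A Leaf) = tmul lam (coprod_a lam (Forest a []))
        (tmul lam (coprod_a lam (Forest Leaf ps')) (Dx x))"
      by (simp add: A ps cop_forest'[of lam a "ps' @ [(x, Leaf)]"] cop_list cop_dec cop_dot)
    moreover have "coprod_a lam (set_first B Leaf) = coprod_a lam (Forest Leaf qs)"
      by (simp add: B)
    ultimately show ?thesis by (simp add: tmul_assoc)
  qed
qed


lemma join_dot_right[simp]: "join F dot T = set_last F T"
  unfolding dot_def by (rule join_single_right)
lemma join_dot_left[simp]: "join dot G T = set_first G T"
  unfolding dot_def by (rule join_single_left)
lemma set_first_ffirst[simp]: "set_first G (ffirst G) = G"
  by (cases G) auto
lemma set_first_dot[simp]: "set_first dot T = Forest T []"
  by (simp add: dot_def del: Forest_Leaf_Nil)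
lemma set_last_dot[simp]: "set_last dot T = Forest T []"
  by (simp add: dot_def del: Forest_Leaf_Nil)

lemma cop_split_last:
  fixes lam :: "'k::comm_ring_1" and F :: "'x forest"
  shows "coprod_a lam F = tmul lam (coprod_a lam (set_last F Leaf)) (coprod_a lam (Forest (flast F) []))"
  using cop_join[of lam F dot "flast F"] by (simp add: cop_dot)

lemma cop_split_first:
  fixes lam :: "'k::comm_ring_1" and G :: "'x forest"
  shows "coprod_a lam G = tmul lam (coprod_a lam (Forest (ffirst G) [])) (coprod_a lam (set_first G Leaf))"
  using cop_join[of lam dot G "ffirst G"] by (simp add: cop_dot)

lemma DD_AF: "DD lam (as_forest X) = lin (\<lambda>T. coprod_a lam (Forest T [])) X"
  by (simp add: DD_def as_forest_def lin_compose)

lemma lin_tmul_sandwich: "lin (\<lambda>T. tmul lam (tmul lam A (h T)) B) X = tmul lam (tmul lam A (lin h X)) B"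
  by (induction X rule: vec_induct) (simp_all add: lin_add lin_smult)

lemma cocycle: "DD lam (as_forest (PP u)) = tensor (as_forest (PP u)) (bas dot) + Lop (DD lam u)"
  by (induction u rule: vec_induct) (simp_all add: cop_Node)

lemma Lop_tensor_bas[simp]: "Lop (tensor u (bas b)) = tensor u (bas (Forest (Node b) []))"
  using tensor_AF_PP[of u "bas b"] by simp

lemma Lop_i: "Lop (tmul lam (tensor x (bas dot)) V) = tmul lam (tensor x (bas dot)) (Lop V)"
proof (induction x rule: vec_induct)
  case (single c a)
  show ?case
  proof (induction V rule: vec_induct)
    case (single d p)
    then show ?case by (cases p) simp
  qed simp_all
qed simp_all

lemma Lop_ii: "tmul lam (Lop U) (tensor y (bas dot)) = Lop (tmul lam U (tensor y (bas dot)))"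
proof (induction y rule: vec_induct)
  case (single c a)
  show ?case
  proof (induction U rule: vec_induct)
    case (single d p)
    then show ?case by (cases p) simp
  qed simp_all
qed simp_all

lemma AFt_RB:
  "fprod lam (Forest (Node x) []) (Forest (Node y) []) = as_forest (PP (fprod lam (Forest (Node x) []) y
     + fprod lam x (Forest (Node y) []) + smult lam (fprod lam x y)))"
proof -
  have "fprod lam (Forest (Node x) []) (Forest (Node y) []) = as_forest (tprod lam (Node x) (Node y))"
    using AF_tm[of lam "bas (Node x)" "bas (Node y)"] by simp
  then show ?thesis using RB_bas[of lam x y] by simp
qed

lemma Lop_iii: "tmul lam (Lop U) (Lop V) = Lop (tmul lam (Lop U) V) + Lop (tmul lam U (Lop V)) + smult lam (Lop (tmul lam U V))"
proof (induction U rule: vec_induct)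
  case (single c p)
  show ?case
  proof (induction V rule: vec_induct)
    case (single d p')
    obtain a b where p: "p = (a, b)" by (cases p)
    obtain a' b' where p': "p' = (a', b')" by (cases p')
    show ?case
      by (simp add: p p' AFt_RB tensor_AF_PP algebra_simps)
  next
    case (add v w)
    then show ?case by (simp add: algebra_simps)
  qed simp
next
  case (add u v)
  then show ?case by (simp add: algebra_simps)
qed simp

lemma tmul_dot_dot: "tmul lam (tensor x (bas dot)) (tensor y (bas dot)) = tensor (mul lam x y) (bas dot)"
  by (simp add: tmul_tensor)


lemma Lop_i': "Lop (tmul lam (bas (X, dot)) V) = tmul lam (bas (X, dot)) (Lop V)"
  using Lop_i[of lam "bas X" V] by simp
lemma Lop_ii': "tmul lam (Lop U) (bas (Y, dot)) = Lop (tmul lam U (bas (Y, dot)))"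
  using Lop_ii[of lam U "bas Y"] by simp

lemma TM_Node:
  fixes lam :: "'k::comm_ring_1" and a b :: "'x forest"
  assumes IH: "\<And>F G :: 'x forest. size F + size G < size a + size b + 4 \<Longrightarrow>
     DD lam (fprod lam F G) = tmul lam (coprod_a lam F) (coprod_a lam G)"
  shows "DD lam (as_forest (tprod lam (Node a) (Node b))) = tmul lam (coprod_a lam (Forest (Node a) [])) (coprod_a lam (Forest (Node b) []))"
proof -
  define w where "w = fprod lam (Forest (Node a) []) b + fprod lam a (Forest (Node b) []) + smult lam (fprod lam a b)"
  have t: "tprod lam (Node a) (Node b) = PP w"
    using RB_bas[of lam a b] by (simp add: w_def)
  have af: "as_forest (PP w) = fprod lam (Forest (Node a) []) (Forest (Node b) [])"
    using AF_tm[of lam "bas (Node a)" "bas (Node b)"] t by simp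
  have i1: "DD lam (fprod lam (Forest (Node a) []) b) = tmul lam (coprod_a lam (Forest (Node a) [])) (coprod_a lam b)"
    by (rule IH) simp
  have i2: "DD lam (fprod lam a (Forest (Node b) [])) = tmul lam (coprod_a lam a) (coprod_a lam (Forest (Node b) []))"
    by (rule IH) simp
  have i3: "DD lam (fprod lam a b) = tmul lam (coprod_a lam a) (coprod_a lam b)"
    by (rule IH) simp
  have "DD lam (as_forest (tprod lam (Node a) (Node b))) = tensor (as_forest (PP w)) (bas dot) + Lop (DD lam w)"
    by (simp only: t cocycle)
  also have "\<dots> = tensor (fprod lam (Forest (Node a) []) (Forest (Node b) [])) (bas dot)
     + Lop (tmul lam (coprod_a lam (Forest (Node a) [])) (coprod_a lam b)
       + tmul lam (coprod_a lam a) (coprod_a lam (Forest (Node b) []))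
       + smult lam (tmul lam (coprod_a lam a) (coprod_a lam b)))"
    unfolding af by (simp only: w_def DD_add DD_smult i1 i2 i3)
  also have "\<dots> = tmul lam (coprod_a lam (Forest (Node a) [])) (coprod_a lam (Forest (Node b) []))"
    by (simp add: cop_Node Lop_i' Lop_ii' Lop_iii algebra_simps)
  finally show ?thesis .
qed

lemma FM:
  fixes lam :: "'k::comm_ring_1" and F G :: "'x forest"
  shows "DD lam (fprod lam F G) = tmul lam (coprod_a lam F) (coprod_a lam G)"
proof (induction "size F + size G" arbitrary: F G rule: less_induct)
  case less
  let ?f = "flast F" and ?g = "ffirst G"
  have TM: "DD lam (as_forest (tprod lam ?f ?g)) = tmul lam (coprod_a lam (Forest ?f [])) (coprod_a lam (Forest ?g []))"
  proof (cases "?f = Leaf \<or> ?g = Leaf")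
    case True
    then show ?thesis by (auto simp: cop_dot)
  next
    case False
    then obtain a b where ab: "?f = Node a" "?g = Node b" by (metis tree.exhaust)
    have s: "size a + size b + 4 \<le> size F + size G"
      using size_flast_less[of F] size_ffirst_less[of G] ab by simp
    show ?thesis unfolding ab
      by (rule TM_Node) (rule less; use s in simp)
  qed
  have "DD lam (fprod lam F G) = lin (\<lambda>T. coprod_a lam (join F G T)) (tprod lam ?f ?g)"
    by (simp add: fprod_def DD_def lin_compose)
  also have "\<dots> = lin (\<lambda>T. tmul lam (tmul lam (coprod_a lam (set_last F Leaf)) (coprod_a lam (Forest T [])))
      (coprod_a lam (set_first G Leaf))) (tprod lam ?f ?g)"
    by (simp only: cop_join)
  also have "\<dots> = tmul lam (tmul lam (coprod_a lam (set_last F Leaf)) (DD lam (as_forest (tprod lam ?f ?g))))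
      (coprod_a lam (set_first G Leaf))"
    by (simp only: lin_tmul_sandwich DD_AF)
  also have "\<dots> = tmul lam (tmul lam (coprod_a lam (set_last F Leaf)) (coprod_a lam (Forest ?f [])))
      (tmul lam (coprod_a lam (Forest ?g [])) (coprod_a lam (set_first G Leaf)))"
    by (simp only: TM tmul_assoc)
  also have "\<dots> = tmul lam (coprod_a lam F) (coprod_a lam G)"
    by (simp only: cop_split_last[symmetric] cop_split_first[symmetric])
  finally show ?case .
qed

lemma DD_mul: "DD lam (mul lam u v) = tmul lam (DD lam u) (DD lam v)"
proof (induction u rule: vec_induct)
  case (single c a)
  show ?case by (induction v rule: vec_induct) (simp_all add: FM)
qed simp_all


definition Cl :: "'k::comm_ring_1 \<Rightarrow> ('x forest \<times> 'x forest \<Rightarrow>\<^sub>0 'k) \<Rightarrow> ('x forest \<times> 'x forest \<times> 'x forest \<Rightarrow>\<^sub>0 'k)" where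
  "Cl lam U = lin (\<lambda>(x, y). lin (\<lambda>(p, q). bas (p, q, y)) (coprod_a lam x)) U"
definition Cr :: "'k::comm_ring_1 \<Rightarrow> ('x forest \<times> 'x forest \<Rightarrow>\<^sub>0 'k) \<Rightarrow> ('x forest \<times> 'x forest \<times> 'x forest \<Rightarrow>\<^sub>0 'k)" where
  "Cr lam U = lin (\<lambda>(x, y). lin (\<lambda>(p, q). bas (x, p, q)) (coprod_a lam y)) U"

definition tlA :: "('a \<times> 'b \<Rightarrow>\<^sub>0 'k::comm_ring_1) \<Rightarrow> ('c \<Rightarrow>\<^sub>0 'k) \<Rightarrow> ('a \<times> 'b \<times> 'c \<Rightarrow>\<^sub>0 'k)" where
  "tlA W B = bilin (\<lambda>(p, q) y. bas (p, q, y)) W B"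
definition trA :: "('a \<Rightarrow>\<^sub>0 'k::comm_ring_1) \<Rightarrow> ('b \<times> 'c \<Rightarrow>\<^sub>0 'k) \<Rightarrow> ('a \<times> 'b \<times> 'c \<Rightarrow>\<^sub>0 'k)" where
  "trA A W = bilin (\<lambda>x (p, q). bas (x, p, q)) A W"

abbreviation tmul3 :: "'k::comm_ring_1 \<Rightarrow> ('x forest \<times> 'x forest \<times> 'x forest \<Rightarrow>\<^sub>0 'k) \<Rightarrow> ('x forest \<times> 'x forest \<times> 'x forest \<Rightarrow>\<^sub>0 'k) \<Rightarrow> ('x forest \<times> 'x forest \<times> 'x forest \<Rightarrow>\<^sub>0 'k)"
  where "tmul3 lam \<equiv> bilin (\<lambda>(x, y, z) (x', y', z'). trA (fprod lam x x') (tensor (fprod lam y y') (fprod lam z z')))"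

lemma tlA_bas[simp]: "tlA (bas (p, q)) (bas y) = bas (p, q, y)" by (simp add: tlA_def)
lemma trA_bas[simp]: "trA (bas x) (bas (p, q)) = bas (x, p, q)" by (simp add: trA_def)
lemma tlA_add_left[simp]: "tlA (U + V) B = tlA U B + tlA V B" by (simp add: tlA_def)
lemma tlA_add_right[simp]: "tlA U (A + B) = tlA U A + tlA U B" by (simp add: tlA_def)
lemma tlA_smult_left[simp]: "tlA (smult c U) B = smult c (tlA U B)" by (simp add: tlA_def)
lemma tlA_smult_right[simp]: "tlA U (smult c B) = smult c (tlA U B)" by (simp add: tlA_def)
lemma tlA_zero_left[simp]: "tlA 0 B = 0" by (simp add: tlA_def)
lemma tlA_zero_right[simp]: "tlA U 0 = 0" by (simp add: tlA_def)
lemma trA_add_left[simp]: "trA (A + B) U = trA A U + trA B U" by (simp add: trA_def)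
lemma trA_add_right[simp]: "trA A (U + V) = trA A U + trA A V" by (simp add: trA_def)
lemma trA_smult_left[simp]: "trA (smult c A) U = smult c (trA A U)" by (simp add: trA_def)
lemma trA_smult_right[simp]: "trA A (smult c U) = smult c (trA A U)" by (simp add: trA_def)
lemma trA_zero_left[simp]: "trA 0 U = 0" by (simp add: trA_def)
lemma trA_zero_right[simp]: "trA A 0 = 0" by (simp add: trA_def)

lemma Cl_bas[simp]: "Cl lam (bas (x, y)) = tlA (coprod_a lam x) (bas y)"
  by (simp add: Cl_def tlA_def bilin_bas_right split_def)
lemma Cr_bas[simp]: "Cr lam (bas (x, y)) = trA (bas x) (coprod_a lam y)"
  by (simp add: Cr_def trA_def bilin_bas_left split_def)
lemma Cl_add[simp]: "Cl lam (U + V) = Cl lam U + Cl lam V" by (simp add: Cl_def lin_add)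
lemma Cl_smult[simp]: "Cl lam (smult c U) = smult c (Cl lam U)" by (simp add: Cl_def lin_smult)
lemma Cl_zero[simp]: "Cl lam 0 = 0" by (simp add: Cl_def)
lemma Cr_add[simp]: "Cr lam (U + V) = Cr lam U + Cr lam V" by (simp add: Cr_def lin_add)
lemma Cr_smult[simp]: "Cr lam (smult c U) = smult c (Cr lam U)" by (simp add: Cr_def lin_smult)
lemma Cr_zero[simp]: "Cr lam 0 = 0" by (simp add: Cr_def)

lemma Cl_tensor: "Cl lam (tensor A B) = tlA (DD lam A) B"
proof (induction A rule: vec_induct)
  case (single c a)
  show ?case by (induction B rule: vec_induct) simp_all
qed simp_all

lemma Cr_tensor: "Cr lam (tensor A B) = trA A (DD lam B)"
proof (induction A rule: vec_induct)
  case (single c a)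
  show ?case by (induction B rule: vec_induct) simp_all
qed simp_all

lemma trA_tensor_tl: "trA A (tensor B C) = tlA (tensor A B) C"
proof (induction A rule: vec_induct)
  case (single c a)
  show ?case
  proof (induction B rule: vec_induct)
    case (single d b)
    show ?case by (induction C rule: vec_induct) (simp_all add: mult_ac)
  qed simp_all
qed simp_all

lemma tmul3_tl: "tmul3 lam (tlA W B) (tlA W' B') = tlA (tmul lam W W') (mul lam B B')"
proof (induction W rule: vec_induct)
  case (single c1 p)
  show ?case
  proof (induction B rule: vec_induct)
    case (single c2 y)
    show ?case
    proof (induction W' rule: vec_induct)
      case (single c3 p')
      show ?case
      proof (induction B' rule: vec_induct)
        case (single c4 y')
        obtain a b where p: "p = (a, b)" by (cases p)
        obtain a' b' where p': "p' = (a', b')" by (cases p')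
        show ?case by (simp add: p p' trA_tensor_tl mult_ac)
      qed simp_all
    qed simp_all
  qed simp_all
qed simp_all

lemma tmul3_tr: "tmul3 lam (trA A W) (trA A' W') = trA (mul lam A A') (tmul lam W W')"
proof (induction W rule: vec_induct)
  case (single c1 p)
  show ?case
  proof (induction A rule: vec_induct)
    case (single c2 y)
    show ?case
    proof (induction W' rule: vec_induct)
      case (single c3 p')
      show ?case
      proof (induction A' rule: vec_induct)
        case (single c4 y')
        obtain a b where p: "p = (a, b)" by (cases p)
        obtain a' b' where p': "p' = (a', b')" by (cases p')
        show ?case by (simp add: p p' mult_ac)
      qed simp_all
    qed simp_all
  qed simp_all
qed simp_all

lemma Cl_tmul: "Cl lam (tmul lam U V) = tmul3 lam (Cl lam U) (Cl lam V)"
proof (induction U rule: vec_induct)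
  case (single c p)
  show ?case
  proof (induction V rule: vec_induct)
    case (single d p')
    obtain a b where p: "p = (a, b)" by (cases p)
    obtain a' b' where p': "p' = (a', b')" by (cases p')
    have "Cl lam (tmul lam (bas p) (bas p')) = tmul3 lam (Cl lam (bas p)) (Cl lam (bas p'))"
      using FM[of lam a a'] tmul3_tl[of lam "coprod_a lam a" "bas b" "coprod_a lam a'" "bas b'"]
      by (simp add: p p' Cl_tensor)
    then show ?case by (simp add: mult_ac)
  qed simp_all
qed simp_all

lemma Cr_tmul: "Cr lam (tmul lam U V) = tmul3 lam (Cr lam U) (Cr lam V)"
proof (induction U rule: vec_induct)
  case (single c p)
  show ?case
  proof (induction V rule: vec_induct)
    case (single d p')
    obtain a b where p: "p = (a, b)" by (cases p)
    obtain a' b' where p': "p' = (a', b')" by (cases p')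
    have "Cr lam (tmul lam (bas p) (bas p')) = tmul3 lam (Cr lam (bas p)) (Cr lam (bas p'))"
      using FM[of lam b b'] tmul3_tr[of lam "bas a" "coprod_a lam b" "bas a'" "coprod_a lam b'"]
      by (simp add: p p' Cr_tensor)
    then show ?case by (simp add: mult_ac)
  qed simp_all
qed simp_all


definition L3 :: "('x forest \<times> 'x forest \<times> 'x forest \<Rightarrow>\<^sub>0 'k::comm_ring_1) \<Rightarrow> ('x forest \<times> 'x forest \<times> 'x forest \<Rightarrow>\<^sub>0 'k)" where
  "L3 W = lin (\<lambda>(p, q, r). bas (p, q, Forest (Node r) [])) W"
definition M3 :: "('x forest \<times> 'x forest \<Rightarrow>\<^sub>0 'k::comm_ring_1) \<Rightarrow> ('x forest \<times> 'x forest \<times> 'x forest \<Rightarrow>\<^sub>0 'k)" where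
  "M3 U = lin (\<lambda>(a, b). bas (a, Forest (Node b) [], dot)) U"

lemma L3_bas[simp]: "L3 (bas (p, q, r)) = bas (p, q, Forest (Node r) [])" by (simp add: L3_def)
lemma L3_add[simp]: "L3 (U + V) = L3 U + L3 V" by (simp add: L3_def lin_add)
lemma L3_smult[simp]: "L3 (smult c U) = smult c (L3 U)" by (simp add: L3_def lin_smult)
lemma L3_zero[simp]: "L3 0 = 0" by (simp add: L3_def)
lemma M3_bas[simp]: "M3 (bas (a, b)) = bas (a, Forest (Node b) [], dot)" by (simp add: M3_def)
lemma M3_add[simp]: "M3 (U + V) = M3 U + M3 V" by (simp add: M3_def lin_add)
lemma M3_smult[simp]: "M3 (smult c U) = smult c (M3 U)" by (simp add: M3_def lin_smult)
lemma M3_zero[simp]: "M3 0 = 0" by (simp add: M3_def)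

lemma L3_tl_bas: "L3 (tlA W (bas b)) = tlA W (bas (Forest (Node b) []))"
proof (induction W rule: vec_induct)
  case (single c p)
  then show ?case by (cases p) simp
qed simp_all

lemma L3_tr_bas: "L3 (trA (bas a) W) = trA (bas a) (Lop W)"
proof (induction W rule: vec_induct)
  case (single c p)
  then show ?case by (cases p) simp
qed simp_all

lemma tlA_Lop_dot: "tlA (Lop U) (bas dot) = M3 U"
proof (induction U rule: vec_induct)
  case (single c p)
  then show ?case by (cases p) simp
qed simp_all

lemma Cl_Lop: "Cl lam (Lop U) = L3 (Cl lam U)"
proof (induction U rule: vec_induct)
  case (single c p)
  then show ?case by (cases p) (simp add: L3_tl_bas)
qed simp_all

lemma Cr_Lop: "Cr lam (Lop U) = M3 U + L3 (Cr lam U)"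
proof (induction U rule: vec_induct)
  case (single c p)
  then show ?case by (cases p) (simp add: L3_tr_bas cop_Node smult_add_right)
next
  case (add u v)
  then show ?case by (simp add: algebra_simps)
qed simp_all

lemma coassoc_Node:
  assumes "Cl lam (coprod_a lam F) = Cr lam (coprod_a lam F)"
  shows "Cl lam (coprod_a lam (Forest (Node F) [])) = Cr lam (coprod_a lam (Forest (Node F) []))"
  using assms by (simp add: cop_Node Cl_Lop Cr_Lop tlA_Lop_dot cop_dot)

lemma coassoc_tmul:
  "Cl lam U = Cr lam U \<Longrightarrow> Cl lam V = Cr lam V \<Longrightarrow> Cl lam (tmul lam U V) = Cr lam (tmul lam U V)"
  by (simp add: Cl_tmul Cr_tmul)

lemma coassoc_Dx: "Cl lam (Dx x) = Cr lam (Dx x)"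
  by (simp add: Dx_def cx_def cop_dec cop_dot)

lemma coassoc:
  fixes lam :: "'k::comm_ring_1" and F :: "'x forest"
  shows "Cl lam (coprod_a lam F) = Cr lam (coprod_a lam F)"
proof (induction "size F" arbitrary: F rule: less_induct)
  case less
  obtain t ps where F: "F = Forest t ps" by (cases F)
  show ?case
  proof (cases ps)
    case Nil
    show ?thesis
    proof (cases t)
      case Leaf
      then show ?thesis using F Nil by (simp add: cop_dot)
    next
      case (Node G)
      have "Cl lam (coprod_a lam G) = Cr lam (coprod_a lam G)"
        by (rule less) (simp add: F Node)
      then show ?thesis using coassoc_Node[of lam G] F Nil Node by simp
    qed
  next
    case (Cons p ps')
    obtain x t' where p: "p = (x, t')" by (cases p)
    show ?thesis
    proof (cases "t = Leaf")
      case True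
      have "Cl lam (coprod_a lam (Forest t' [])) = Cr lam (coprod_a lam (Forest t' []))"
        by (rule less) (simp add: F Cons p True)
      moreover have "Cl lam (coprod_a lam (Forest Leaf ps')) = Cr lam (coprod_a lam (Forest Leaf ps'))"
        by (rule less) (simp add: F Cons p True)
      ultimately show ?thesis
        by (simp add: F Cons p True cop_dec coassoc_tmul coassoc_Dx)
    next
      case False
      then obtain G where G: "t = Node G" by (cases t) auto
      have "Cl lam (coprod_a lam (Forest t [])) = Cr lam (coprod_a lam (Forest t []))"
        by (rule less) (simp add: F Cons)
      moreover have "Cl lam (coprod_a lam (Forest Leaf ps)) = Cr lam (coprod_a lam (Forest Leaf ps))"
        by (rule less) (simp add: F G)
      ultimately show ?thesis
        by (simp only: F cop_forest'[of lam t ps] coassoc_tmul)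
    qed
  qed
qed


definition el :: "('x forest \<times> 'x forest \<Rightarrow>\<^sub>0 'k::comm_ring_1) \<Rightarrow> ('x forest \<Rightarrow>\<^sub>0 'k)" where
  "el U = lin (\<lambda>(x, y). smult (counit_a x) (bas y)) U"
definition er :: "('x forest \<times> 'x forest \<Rightarrow>\<^sub>0 'k::comm_ring_1) \<Rightarrow> ('x forest \<Rightarrow>\<^sub>0 'k)" where
  "er U = lin (\<lambda>(x, y). smult (counit_a y) (bas x)) U"

lemma el_bas[simp]: "el (bas (x, y)) = smult (counit_a x) (bas y)" by (simp add: el_def)
lemma el_add[simp]: "el (U + V) = el U + el V" by (simp add: el_def lin_add)
lemma el_smult[simp]: "el (smult c U) = smult c (el U)" by (simp add: el_def lin_smult)
lemma el_zero[simp]: "el 0 = 0" by (simp add: el_def)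
lemma er_bas[simp]: "er (bas (x, y)) = smult (counit_a y) (bas x)" by (simp add: er_def)
lemma er_add[simp]: "er (U + V) = er U + er V" by (simp add: er_def lin_add)
lemma er_smult[simp]: "er (smult c U) = smult c (er U)" by (simp add: er_def lin_smult)
lemma er_zero[simp]: "er 0 = 0" by (simp add: er_def)

lemma counit_lookup: "counit_a a = Poly_Mapping.lookup (bas a) dot"
  by (simp add: counit_a_def lookup_bas)

lemma el_tensor: "el (tensor A B) = smult (Poly_Mapping.lookup A dot) B"
proof (induction A rule: vec_induct)
  case (single c a)
  show ?case
    by (induction B rule: vec_induct) (simp_all add: counit_lookup smult_add_right mult_ac)
next
  case (add u v)
  then show ?case by (simp add: lookup_add smult_add_left)
qed simp

lemma er_tensor: "er (tensor A B) = smult (Poly_Mapping.lookup B dot) A"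
proof (induction A rule: vec_induct)
  case (single c a)
  show ?case
  proof (induction B rule: vec_induct)
    case (add u v)
    then show ?case by (simp add: lookup_add smult_add_left distrib_right)
  qed (simp_all add: counit_lookup mult_ac)
qed (simp_all add: smult_add_right)

lemma lookup_fprod_dot: "Poly_Mapping.lookup (fprod lam x y) dot = counit_a x * counit_a y"
  using counit_mult[of lam x y] by (simp add: lin_scalar_counit)

lemma el_tmul: "el (tmul lam U V) = mul lam (el U) (el V)"
proof (induction U rule: vec_induct)
  case (single c p)
  show ?case
  proof (induction V rule: vec_induct)
    case (single d p')
    then show ?case by (cases p; cases p') (simp add: el_tensor lookup_fprod_dot mult_ac)
  qed simp_all
qed simp_all

lemma er_tmul: "er (tmul lam U V) = mul lam (er U) (er V)"
proof (induction U rule: vec_induct)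
  case (single c p)
  show ?case
  proof (induction V rule: vec_induct)
    case (single d p')
    then show ?case by (cases p; cases p') (simp add: er_tensor lookup_fprod_dot mult_ac)
  qed simp_all
qed simp_all

lemma counit_Node[simp]: "counit_a (Forest (Node F) []) = 0"
  by (simp add: counit_a_def dot_def del: Forest_Leaf_Nil)
lemma counit_dot[simp]: "counit_a dot = 1"
  by (simp add: counit_a_def)
lemma counit_cx[simp]: "counit_a (Forest Leaf [(x, t)]) = 0"
  by (simp add: counit_a_def dot_def del: Forest_Leaf_Nil)

lemma cx_ne_dot[simp]: "Forest Leaf [(x, t)] \<noteq> dot" "dot \<noteq> Forest Leaf [(x, t)]"
  by (simp_all add: dot_def del: Forest_Leaf_Nil)

lemma el_Lop: "el (Lop U) = as_forest (PP (el U))"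
proof (induction U rule: vec_induct)
  case (single c p)
  then show ?case by (cases p) simp
qed simp_all

lemma er_Lop: "er (Lop U) = 0"
proof (induction U rule: vec_induct)
  case (single c p)
  then show ?case by (cases p) simp
qed simp_all

lemma fprod_split: "fprod lam (Forest t []) (Forest Leaf ps) = bas (Forest t ps)"
  by (simp add: fprod_def del: Forest_Leaf_Nil)
lemma fprod_cx: "fprod lam (Forest Leaf [(x, Leaf)]) (Forest t []) = bas (Forest Leaf [(x, t)])"
  by (simp add: fprod_def del: Forest_Leaf_Nil)
lemma fprod_FL: "fprod lam (Forest Leaf [(x, t)]) (Forest Leaf ps) = bas (Forest Leaf ((x, t) # ps))"
  by (simp add: fprod_def del: Forest_Leaf_Nil)

lemma el_Dx: "el (Dx x) = cx x"
  by (simp add: Dx_def cx_def el_tensor lookup_bas)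
lemma er_Dx: "er (Dx x) = cx x"
  by (simp add: Dx_def cx_def er_tensor lookup_bas)

lemma counit_law:
  fixes lam :: "'k::comm_ring_1" and F :: "'x forest"
  shows "el (coprod_a lam F) = bas F \<and> er (coprod_a lam F) = bas F"
proof (induction "size F" arbitrary: F rule: less_induct)
  case less
  obtain t ps where F: "F = Forest t ps" by (cases F)
  show ?case
  proof (cases ps)
    case Nil
    show ?thesis
    proof (cases t)
      case Leaf
      then show ?thesis using F Nil by (simp add: cop_dot)
    next
      case (Node G)
      have "el (coprod_a lam G) = bas G \<and> er (coprod_a lam G) = bas G"
        by (rule less) (simp add: F Node)
      then show ?thesis using F Nil Node by (simp add: cop_Node el_Lop er_Lop)
    qed
  next
    case (Cons p ps')
    obtain x t' where p: "p = (x, t')" by (cases p)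
    show ?thesis
    proof (cases "t = Leaf")
      case True
      have "el (coprod_a lam (Forest t' [])) = bas (Forest t' []) \<and> er (coprod_a lam (Forest t' [])) = bas (Forest t' [])"
        by (rule less) (simp add: F Cons p True)
      moreover have "el (coprod_a lam (Forest Leaf ps')) = bas (Forest Leaf ps') \<and> er (coprod_a lam (Forest Leaf ps')) = bas (Forest Leaf ps')"
        by (rule less) (simp add: F Cons p True)
      ultimately show ?thesis
        by (simp add: F Cons p True cop_dec el_tmul er_tmul el_Dx er_Dx cx_def fprod_cx fprod_FL del: Forest_Leaf_Nil)
    next
      case False
      then obtain G where G: "t = Node G" by (cases t) auto
      have "el (coprod_a lam (Forest t [])) = bas (Forest t []) \<and> er (coprod_a lam (Forest t [])) = bas (Forest t [])"
        by (rule less) (simp add: F Cons)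
      moreover have "el (coprod_a lam (Forest Leaf ps)) = bas (Forest Leaf ps) \<and> er (coprod_a lam (Forest Leaf ps)) = bas (Forest Leaf ps)"
        by (rule less) (simp add: F G)
      ultimately show ?thesis
        by (simp only: F cop_forest'[of lam t ps] el_tmul er_tmul bilin_bas fprod_split)
    qed
  qed
qed


lemma size_set_first: "size (set_first G T) + size (ffirst G) = size G + size T"
  by (cases G) auto

lemma size_join: "size (join F G T) + size (flast F) + size (ffirst G) + 1 = size F + size G + size T"
proof -
  obtain t ps where F: "F = Forest t ps" by (cases F)
  obtain t' qs where G: "G = Forest t' qs" by (cases G)
  show ?thesis
  proof (cases "ps = []")
    case True
    then show ?thesis by (simp add: F G)
  next
    case False
    then obtain ps' p where ps: "ps = ps' @ [p]" by (metis rev_exhaust)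
    obtain x l where p: "p = (x, l)" by (cases p)
    show ?thesis by (simp add: F G ps p)
  qed
qed

lemma size_set_last: "size (set_last F T) + size (flast F) = size F + size T"
proof -
  have "size (dot :: 'a forest) = 1" "ffirst (dot :: 'a forest) = Leaf" by (simp_all add: dot_def del: Forest_Leaf_Nil)
  then show ?thesis using size_join[of F dot T] by simp
qed

lemma keys_lin_bas:
  fixes h :: "'a \<Rightarrow> 'b" and X :: "'a \<Rightarrow>\<^sub>0 'k::comm_ring_1"
  shows "T \<in> Poly_Mapping.keys (lin (\<lambda>T'. bas (h T')) X) \<Longrightarrow> \<exists>T'\<in>Poly_Mapping.keys X. T = h T'"
proof -
  assume "T \<in> Poly_Mapping.keys (lin (\<lambda>T'. bas (h T')) X)"
  then have "T \<in> (\<Union>a\<in>Poly_Mapping.keys X. Poly_Mapping.keys (bas (h a) :: ('b \<Rightarrow>\<^sub>0 'k)))"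
    using keys_lin[of "\<lambda>T'. bas (h T')" X] by blast
  then show ?thesis by simp
qed

lemma keys_add3: "T \<in> Poly_Mapping.keys (A + B + smult c C) \<Longrightarrow> T \<in> Poly_Mapping.keys A \<or> T \<in> Poly_Mapping.keys B \<or> T \<in> Poly_Mapping.keys C"
proof -
  assume "T \<in> Poly_Mapping.keys (A + B + smult c C)"
  then have "T \<in> Poly_Mapping.keys (A + B) \<or> T \<in> Poly_Mapping.keys (smult c C)"
    using Poly_Mapping.keys_add[of "A + B" "smult c C"] by blast
  then show ?thesis using Poly_Mapping.keys_add[of A B] keys_smult[of c C] by blast
qed

lemma keys_tprod_size: "T \<in> Poly_Mapping.keys (tprod lam f g) \<Longrightarrow> size T \<le> size f + size g"
proof (induction lam f g arbitrary: T rule: tprod.induct)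
  case (1 lam T')
  then show ?case by simp
next
  case (2 lam F)
  then show ?case by simp
next
  case (3 lam F G)
  from "3.prems"[unfolded tprod.simps(3)] show ?case
  proof (elim keys_add3[elim_format] disjE)
    assume "T \<in> Poly_Mapping.keys (lin (\<lambda>T. bas (Node (set_first G T))) (tprod lam (Node F) (ffirst G)))"
    then obtain T' where "T' \<in> Poly_Mapping.keys (tprod lam (Node F) (ffirst G))" "T = Node (set_first G T')"
      using keys_lin_bas[of T "\<lambda>T. Node (set_first G T)" "tprod lam (Node F) (ffirst G)"] by blast
    then show ?thesis using "3.IH"(1)[of T'] size_set_first[of G T'] by simp
  next
    assume "T \<in> Poly_Mapping.keys (lin (\<lambda>T. bas (Node (set_last F T))) (tprod lam (flast F) (Node G)))"
    then obtain T' where "T' \<in> Poly_Mapping.keys (tprod lam (flast F) (Node G))" "T = Node (set_last F T')"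
      using keys_lin_bas[of T "\<lambda>T. Node (set_last F T)" "tprod lam (flast F) (Node G)"] by blast
    then show ?thesis using "3.IH"(2)[of T'] size_set_last[of F T'] by simp
  next
    assume "T \<in> Poly_Mapping.keys (lin (\<lambda>T. bas (Node (join F G T))) (tprod lam (flast F) (ffirst G)))"
    then obtain T' where "T' \<in> Poly_Mapping.keys (tprod lam (flast F) (ffirst G))" "T = Node (join F G T')"
      using keys_lin_bas[of T "\<lambda>T. Node (join F G T)" "tprod lam (flast F) (ffirst G)"] by blast
    then show ?thesis using "3.IH"(3)[of T'] size_join[of F G T'] by simp
  qed
qed

definition dg :: "'x forest \<Rightarrow> nat" where "dg F = size F - 1"

lemma size_forest_pos: "size (F :: 'x forest) \<ge> 1"
  by (cases F) auto

lemma keys_fprod_dg: "K \<in> Poly_Mapping.keys (fprod lam F G) \<Longrightarrow> dg K \<le> dg F + dg G"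
proof -
  assume "K \<in> Poly_Mapping.keys (fprod lam F G)"
  then obtain T where T: "T \<in> Poly_Mapping.keys (tprod lam (flast F) (ffirst G))" "K = join F G T"
    unfolding fprod_def using keys_lin_bas[of K "join F G" "tprod lam (flast F) (ffirst G)"] by blast
  have "size T \<le> size (flast F) + size (ffirst G)" by (rule keys_tprod_size[OF T(1)])
  then show ?thesis using size_join[of F G T] size_forest_pos[of F] size_forest_pos[of G] T(2)
    by (simp add: dg_def)
qed

lemma dg_zero: "dg b = 0 \<Longrightarrow> b = dot"
proof -
  assume "dg b = 0"
  then have s: "size b = 1" using size_forest_pos[of b] by (simp add: dg_def)
  obtain t ps where b: "b = Forest t ps" by (cases b)
  have "t = Leaf" using s b by (cases t) auto
  moreover have "ps = []" using s b by (cases ps) auto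
  ultimately show ?thesis using b by simp
qed

definition BD :: "nat \<Rightarrow> ('x forest \<times> 'x forest \<Rightarrow>\<^sub>0 'k::comm_ring_1) \<Rightarrow> bool" where
  "BD n U \<longleftrightarrow> (\<forall>p \<in> Poly_Mapping.keys U. dg (fst p) + dg (snd p) \<le> n)"

lemma BD_bas: "dg a + dg b \<le> n \<Longrightarrow> BD n (bas (a, b))"
  by (simp add: BD_def)
lemma BD_add: "BD n U \<Longrightarrow> BD n V \<Longrightarrow> BD n (U + V)"
proof -
  assume U: "BD n U" and V: "BD n V"
  show ?thesis unfolding BD_def
  proof
    fix p assume "p \<in> Poly_Mapping.keys (U + V)"
    then have "p \<in> Poly_Mapping.keys U \<or> p \<in> Poly_Mapping.keys V"
      using Poly_Mapping.keys_add[of U V] by blast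
    then show "dg (fst p) + dg (snd p) \<le> n" using U V unfolding BD_def by blast
  qed
qed
lemma BD_smult: "BD n U \<Longrightarrow> BD n (smult c U)"
proof -
  assume U: "BD n U"
  show ?thesis unfolding BD_def
  proof
    fix p assume "p \<in> Poly_Mapping.keys (smult c U)"
    then have "p \<in> Poly_Mapping.keys U" using keys_smult[of c U] by blast
    then show "dg (fst p) + dg (snd p) \<le> n" using U unfolding BD_def by blast
  qed
qed
lemma BD_mono: "BD n U \<Longrightarrow> n \<le> m \<Longrightarrow> BD m U"
  unfolding BD_def using order_trans by blast

lemma keys_tensor: "Poly_Mapping.keys (tensor A B) \<subseteq> Poly_Mapping.keys A \<times> Poly_Mapping.keys B"
proof -
  have "Poly_Mapping.keys (tensor A B) \<subseteq> (\<Union>a\<in>Poly_Mapping.keys A. \<Union>b\<in>Poly_Mapping.keys B. Poly_Mapping.keys (bas (a, b) :: ('a \<times> 'b \<Rightarrow>\<^sub>0 'c)))"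
    unfolding tensor_def by (rule keys_bilin)
  also have "\<dots> \<subseteq> Poly_Mapping.keys A \<times> Poly_Mapping.keys B" by auto
  finally show ?thesis .
qed

lemma BD_tmul:
  fixes lam :: "'k::comm_ring_1" and U V :: "('x forest \<times> 'x forest \<Rightarrow>\<^sub>0 'k)"
  assumes U: "BD n U" and V: "BD m V"
  shows "BD (n + m) (tmul lam U V)"
  unfolding BD_def
proof
  fix p assume p0: "p \<in> Poly_Mapping.keys (tmul lam U V)"
  have "p \<in> (\<Union>q\<in>Poly_Mapping.keys U. \<Union>q'\<in>Poly_Mapping.keys V.
      Poly_Mapping.keys ((\<lambda>(x, y) (x', y'). tensor (fprod lam x x') (fprod lam y y')) q q'))"
    using keys_bilin[of "\<lambda>(x, y) (x', y'). tensor (fprod lam x x') (fprod lam y y')" U V] p0 by blast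
  then obtain q q' where q: "q \<in> Poly_Mapping.keys U" "q' \<in> Poly_Mapping.keys V"
    and p: "p \<in> Poly_Mapping.keys ((\<lambda>(x, y) (x', y'). tensor (fprod lam x x') (fprod lam y y')) q q')"
    by blast
  obtain x y where qq: "q = (x, y)" by (cases q)
  obtain x' y' where qq': "q' = (x', y')" by (cases q')
  have "p \<in> Poly_Mapping.keys (tensor (fprod lam x x') (fprod lam y y'))" using p qq qq' by simp
  then have "p \<in> Poly_Mapping.keys (fprod lam x x') \<times> Poly_Mapping.keys (fprod lam y y')"
    using keys_tensor by blast
  then have "fst p \<in> Poly_Mapping.keys (fprod lam x x')" "snd p \<in> Poly_Mapping.keys (fprod lam y y')"
    by auto
  then have "dg (fst p) \<le> dg x + dg x'" "dg (snd p) \<le> dg y + dg y'"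
    using keys_fprod_dg by blast+
  moreover have "dg x + dg y \<le> n" using U q(1) qq unfolding BD_def by fastforce
  moreover have "dg x' + dg y' \<le> m" using V q(2) qq' unfolding BD_def by fastforce
  ultimately show "dg (fst p) + dg (snd p) \<le> n + m" by simp
qed

lemma BD_Lop:
  fixes U :: "('x forest \<times> 'x forest \<Rightarrow>\<^sub>0 'k::comm_ring_1)"
  assumes U: "BD n U"
  shows "BD (n + 2) (Lop U)"
  unfolding BD_def
proof
  fix p assume p0: "p \<in> Poly_Mapping.keys (Lop U)"
  have "p \<in> (\<Union>q\<in>Poly_Mapping.keys U. Poly_Mapping.keys ((\<lambda>(a, b). bas (a, Forest (Node b) [])) q :: ('x forest \<times> 'x forest \<Rightarrow>\<^sub>0 'k)))"
    using keys_lin[of "\<lambda>(a, b). bas (a, Forest (Node b) [])" U] p0 unfolding Lop_def by blast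
  then obtain q where q: "q \<in> Poly_Mapping.keys U"
    and p: "p \<in> Poly_Mapping.keys ((\<lambda>(a, b). bas (a, Forest (Node b) [])) q :: ('x forest \<times> 'x forest \<Rightarrow>\<^sub>0 'k))"
    by blast
  obtain a b where qq: "q = (a, b)" by (cases q)
  have "p = (a, Forest (Node b) [])" using p qq by simp
  moreover have "dg a + dg b \<le> n" using U q qq unfolding BD_def by fastforce
  moreover have "dg (Forest (Node b) []) = dg b + 2" using size_forest_pos[of b] by (simp add: dg_def)
  ultimately show "dg (fst p) + dg (snd p) \<le> n + 2" by simp
qed


lemma dg_Forest: "dg (Forest t ps) = size t + size_list (size_prod (\<lambda>_. 0) size) ps"
  by (simp add: dg_def)
lemma dg_dot[simp]: "dg dot = 0"
  by (simp add: dg_def dot_def del: Forest_Leaf_Nil)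

lemma BD_cop:
  fixes lam :: "'k::comm_ring_1" and F :: "'x forest"
  shows "BD (dg F) (coprod_a lam F)"
proof (induction "size F" arbitrary: F rule: less_induct)
  case less
  obtain t ps where F: "F = Forest t ps" by (cases F)
  show ?case
  proof (cases ps)
    case Nil
    show ?thesis
    proof (cases t)
      case Leaf
      then show ?thesis using F Nil by (simp add: cop_dot BD_bas)
    next
      case (Node G)
      have "BD (dg G) (coprod_a lam G)" by (rule less) (simp add: F Node)
      then have "BD (dg G + 2) (Lop (coprod_a lam G))" by (rule BD_Lop)
      moreover have "dg (Forest (Node G) []) = dg G + 2" using size_forest_pos[of G] by (simp add: dg_def)
      ultimately show ?thesis using F Nil Node by (simp add: cop_Node BD_add BD_bas)
    qed
  next
    case (Cons p ps')
    obtain x t' where p: "p = (x, t')" by (cases p)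
    show ?thesis
    proof (cases "t = Leaf")
      case True
      have h1: "BD (dg (Forest t' [])) (coprod_a lam (Forest t' []))"
        by (rule less) (simp add: F Cons p True)
      have h2: "BD (dg (Forest Leaf ps')) (coprod_a lam (Forest Leaf ps'))"
        by (rule less) (simp add: F Cons p True)
      have h0: "BD 2 (Dx x :: ('x forest \<times> 'x forest \<Rightarrow>\<^sub>0 'k))"
        by (simp add: Dx_def cx_def BD_add BD_bas dg_Forest)
      have "BD (2 + dg (Forest t' []) + dg (Forest Leaf ps')) (tmul lam (tmul lam (Dx x) (coprod_a lam (Forest t' []))) (coprod_a lam (Forest Leaf ps')))"
        by (intro BD_tmul h0 h1 h2)
      moreover have "2 + dg (Forest t' []) + dg (Forest Leaf ps') = dg F"
        by (simp add: F Cons p True dg_Forest del: Forest_Leaf_Nil)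
      ultimately show ?thesis by (simp add: F Cons p True cop_dec)
    next
      case False
      have h1: "BD (dg (Forest t [])) (coprod_a lam (Forest t []))"
        by (rule less) (simp add: F Cons)
      have h2: "BD (dg (Forest Leaf ps)) (coprod_a lam (Forest Leaf ps))"
        by (rule less) (use False in \<open>cases t, auto simp: F\<close>)
      have "BD (dg (Forest t []) + dg (Forest Leaf ps)) (tmul lam (coprod_a lam (Forest t [])) (coprod_a lam (Forest Leaf ps)))"
        by (intro BD_tmul h1 h2)
      moreover have "dg (Forest t []) + dg (Forest Leaf ps) = dg F"
        by (simp add: F Cons dg_Forest del: Forest_Leaf_Nil)
      ultimately show ?thesis by (simp only: F cop_forest'[of lam t ps])
    qed
  qed
qed

lemma lookup_er: "Poly_Mapping.lookup (er U) a = Poly_Mapping.lookup U (a, dot)"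
proof (induction U rule: vec_induct)
  case (single c p)
  then show ?case by (cases p) (auto simp: lookup_bas counit_a_def)
next
  case (add u v)
  then show ?case by (simp add: lookup_add)
qed simp

lemma lookup_el: "Poly_Mapping.lookup (el U) b = Poly_Mapping.lookup U (dot, b)"
proof (induction U rule: vec_induct)
  case (single c p)
  then show ?case by (cases p) (auto simp: lookup_bas counit_a_def)
next
  case (add u v)
  then show ?case by (simp add: lookup_add)
qed simp

lemma RL_keys:
  fixes lam :: "'k::comm_ring_1" and F :: "'x forest"
  assumes k: "(x, y) \<in> Poly_Mapping.keys (coprod_a lam F - bas (F, dot))"
  shows "dg x < dg F"
proof (rule ccontr)
  assume nl: "\<not> dg x < dg F"
  have y: "y = dot"
  proof (cases "(x, y) = (F, dot)")
    case False
    then have "(x, y) \<in> Poly_Mapping.keys (coprod_a lam F)"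
      using k Poly_Mapping.keys_diff[of "coprod_a lam F" "bas (F, dot)"] by auto
    then have "dg x + dg y \<le> dg F" using BD_cop[of F lam] unfolding BD_def by fastforce
    then have "dg y = 0" using nl by simp
    then show ?thesis by (rule dg_zero)
  qed simp
  have "Poly_Mapping.lookup (coprod_a lam F - bas (F, dot)) (x, y) = 0"
    using lookup_er[of "coprod_a lam F" x] counit_law[of lam F]
    by (simp add: y lookup_minus lookup_bas)
  then show False using k by (simp add: in_keys_iff)
qed

lemma RR_keys:
  fixes lam :: "'k::comm_ring_1" and F :: "'x forest"
  assumes k: "(x, y) \<in> Poly_Mapping.keys (coprod_a lam F - bas (dot, F))"
  shows "dg y < dg F"
proof (rule ccontr)
  assume nl: "\<not> dg y < dg F"
  have x: "x = dot"
  proof (cases "(x, y) = (dot, F)")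
    case False
    then have "(x, y) \<in> Poly_Mapping.keys (coprod_a lam F)"
      using k Poly_Mapping.keys_diff[of "coprod_a lam F" "bas (dot, F)"] by auto
    then have "dg x + dg y \<le> dg F" using BD_cop[of F lam] unfolding BD_def by fastforce
    then have "dg x = 0" using nl by simp
    then show ?thesis by (rule dg_zero)
  qed simp
  have "Poly_Mapping.lookup (coprod_a lam F - bas (dot, F)) (x, y) = 0"
    using lookup_el[of "coprod_a lam F" y] counit_law[of lam F]
    by (simp add: x lookup_minus lookup_bas)
  then show False using k by (simp add: in_keys_iff)
qed


fun SLn :: "'k::comm_ring_1 \<Rightarrow> nat \<Rightarrow> 'x forest \<Rightarrow> ('x forest \<Rightarrow>\<^sub>0 'k)" where
  "SLn lam 0 F = 0"
| "SLn lam (Suc n) F = smult (counit_a F) (bas dot)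
     - lin (\<lambda>(x, y). mul lam (SLn lam n x) (bas y)) (coprod_a lam F - bas (F, dot))"

fun SRn :: "'k::comm_ring_1 \<Rightarrow> nat \<Rightarrow> 'x forest \<Rightarrow> ('x forest \<Rightarrow>\<^sub>0 'k)" where
  "SRn lam 0 F = 0"
| "SRn lam (Suc n) F = smult (counit_a F) (bas dot)
     - lin (\<lambda>(x, y). mul lam (bas x) (SRn lam n y)) (coprod_a lam F - bas (dot, F))"

definition SL :: "'k::comm_ring_1 \<Rightarrow> 'x forest \<Rightarrow> ('x forest \<Rightarrow>\<^sub>0 'k)" where
  "SL lam F = SLn lam (Suc (dg F)) F"
definition SR :: "'k::comm_ring_1 \<Rightarrow> 'x forest \<Rightarrow> ('x forest \<Rightarrow>\<^sub>0 'k)" where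
  "SR lam F = SRn lam (Suc (dg F)) F"

lemma SLn_stable: "dg F < n \<Longrightarrow> SLn lam n F = SL lam F"
proof (induction n arbitrary: F rule: less_induct)
  case (less n)
  then obtain m where n: "n = Suc m" by (cases n) auto
  have "lin (\<lambda>(x, y). mul lam (SLn lam m x) (bas y)) (coprod_a lam F - bas (F, dot))
      = lin (\<lambda>(x, y). mul lam (SLn lam (dg F) x) (bas y)) (coprod_a lam F - bas (F, dot))"
  proof (rule lin_cong)
    fix p assume p: "p \<in> Poly_Mapping.keys (coprod_a lam F - bas (F, dot))"
    obtain x y where xy: "p = (x, y)" by (cases p)
    have d: "dg x < dg F" using RL_keys p xy by blast
    have "SLn lam m x = SL lam x" using less.IH[of m x] d less.prems n by simp
    moreover have "SLn lam (dg F) x = SL lam x" using less.IH[of "dg F" x] d less.prems n by simp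
    ultimately show "(\<lambda>(x, y). mul lam (SLn lam m x) (bas y)) p = (\<lambda>(x, y). mul lam (SLn lam (dg F) x) (bas y)) p"
      by (simp add: xy)
  qed
  then show ?case by (simp add: n SL_def)
qed

lemma SRn_stable: "dg F < n \<Longrightarrow> SRn lam n F = SR lam F"
proof (induction n arbitrary: F rule: less_induct)
  case (less n)
  then obtain m where n: "n = Suc m" by (cases n) auto
  have "lin (\<lambda>(x, y). mul lam (bas x) (SRn lam m y)) (coprod_a lam F - bas (dot, F))
      = lin (\<lambda>(x, y). mul lam (bas x) (SRn lam (dg F) y)) (coprod_a lam F - bas (dot, F))"
  proof (rule lin_cong)
    fix p assume p: "p \<in> Poly_Mapping.keys (coprod_a lam F - bas (dot, F))"
    obtain x y where xy: "p = (x, y)" by (cases p)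
    have d: "dg y < dg F" using RR_keys p xy by blast
    have "SRn lam m y = SR lam y" using less.IH[of m y] d less.prems n by simp
    moreover have "SRn lam (dg F) y = SR lam y" using less.IH[of "dg F" y] d less.prems n by simp
    ultimately show "(\<lambda>(x, y). mul lam (bas x) (SRn lam m y)) p = (\<lambda>(x, y). mul lam (bas x) (SRn lam (dg F) y)) p"
      by (simp add: xy)
  qed
  then show ?case by (simp add: n SR_def)
qed

lemma SL_eq: "SL lam F = smult (counit_a F) (bas dot)
     - lin (\<lambda>(x, y). mul lam (SL lam x) (bas y)) (coprod_a lam F - bas (F, dot))"
proof -
  have "SL lam F = SLn lam (Suc (dg F)) F" by (simp add: SL_def)
  also have "\<dots> = smult (counit_a F) (bas dot)
     - lin (\<lambda>(x, y). mul lam (SL lam x) (bas y)) (coprod_a lam F - bas (F, dot))"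
    by (simp only: SLn.simps, intro arg_cong2[where f = "(-)"] refl lin_cong)
       (auto simp: SLn_stable dest: RL_keys)
  finally show ?thesis .
qed

lemma SR_eq: "SR lam F = smult (counit_a F) (bas dot)
     - lin (\<lambda>(x, y). mul lam (bas x) (SR lam y)) (coprod_a lam F - bas (dot, F))"
proof -
  have "SR lam F = SRn lam (Suc (dg F)) F" by (simp add: SR_def)
  also have "\<dots> = smult (counit_a F) (bas dot)
     - lin (\<lambda>(x, y). mul lam (bas x) (SR lam y)) (coprod_a lam F - bas (dot, F))"
    by (simp only: SRn.simps, intro arg_cong2[where f = "(-)"] refl lin_cong)
       (auto simp: SRn_stable dest: RR_keys)
  finally show ?thesis .
qed

lemma SL_antipode: "lin (\<lambda>(x, y). mul lam (SL lam x) (bas y)) (coprod_a lam F) = smult (counit_a F) (bas dot)"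
proof -
  have "coprod_a lam F = bas (F, dot) + (coprod_a lam F - bas (F, dot))" by simp
  then have "lin (\<lambda>(x, y). mul lam (SL lam x) (bas y)) (coprod_a lam F)
     = SL lam F + lin (\<lambda>(x, y). mul lam (SL lam x) (bas y)) (coprod_a lam F - bas (F, dot))"
    by (metis (no_types, lifting) lin_add lin_bas mul_dot_right case_prod_conv)
  then show ?thesis using SL_eq[of lam F] by simp
qed

lemma SR_antipode: "lin (\<lambda>(x, y). mul lam (bas x) (SR lam y)) (coprod_a lam F) = smult (counit_a F) (bas dot)"
proof -
  have "coprod_a lam F = bas (dot, F) + (coprod_a lam F - bas (dot, F))" by simp
  then have "lin (\<lambda>(x, y). mul lam (bas x) (SR lam y)) (coprod_a lam F)
     = SR lam F + lin (\<lambda>(x, y). mul lam (bas x) (SR lam y)) (coprod_a lam F - bas (dot, F))"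
    by (metis (no_types, lifting) lin_add lin_bas mul_dot_left case_prod_conv)
  then show ?thesis using SR_eq[of lam F] by simp
qed


definition convA :: "'k::comm_ring_1 \<Rightarrow> ('x forest \<Rightarrow> ('x forest \<Rightarrow>\<^sub>0 'k)) \<Rightarrow> ('x forest \<Rightarrow> ('x forest \<Rightarrow>\<^sub>0 'k)) \<Rightarrow> 'x forest \<Rightarrow> ('x forest \<Rightarrow>\<^sub>0 'k)" where
  "convA lam f g F = lin (\<lambda>(x, y). mul lam (f x) (g y)) (coprod_a lam F)"

definition ee :: "'x forest \<Rightarrow> ('x forest \<Rightarrow>\<^sub>0 'k::comm_ring_1)" where
  "ee F = smult (counit_a F) (bas dot)"

lemma lin_tl: "lin K (tlA W (bas y)) = lin (\<lambda>(p, q). K (p, q, y)) W"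
proof (induction W rule: vec_induct)
  case (single c p)
  then show ?case by (cases p) (simp add: lin_smult)
qed (simp_all add: lin_add)

lemma lin_tr: "lin K (trA (bas x) W) = lin (\<lambda>(p, q). K (x, p, q)) W"
proof (induction W rule: vec_induct)
  case (single c p)
  then show ?case by (cases p) (simp add: lin_smult)
qed (simp_all add: lin_add)

lemma lin_Cl: "lin K (Cl lam U) = lin (\<lambda>(x, y). lin (\<lambda>(p, q). K (p, q, y)) (coprod_a lam x)) U"
proof (induction U rule: vec_induct)
  case (single c p)
  then show ?case by (cases p) (simp add: lin_smult lin_tl)
qed (simp_all add: lin_add)

lemma lin_Cr: "lin K (Cr lam U) = lin (\<lambda>(x, y). lin (\<lambda>(p, q). K (x, p, q)) (coprod_a lam y)) U"
proof (induction U rule: vec_induct)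
  case (single c p)
  then show ?case by (cases p) (simp add: lin_smult lin_tr split_def)
qed (simp_all add: lin_add)

lemma convA_assoc: "convA lam (convA lam f g) h F = convA lam f (convA lam g h) F"
proof -
  have "convA lam (convA lam f g) h F = lin (\<lambda>(x, y). lin (\<lambda>(p, q). mul lam (mul lam (f p) (g q)) (h y)) (coprod_a lam x)) (coprod_a lam F)"
    unfolding convA_def by (intro lin_cong) (auto simp: bilin_lin_left split_def)
  also have "\<dots> = lin (\<lambda>(p, q, r). mul lam (mul lam (f p) (g q)) (h r)) (Cl lam (coprod_a lam F))"
    by (simp add: lin_Cl)
  also have "\<dots> = lin (\<lambda>(p, q, r). mul lam (f p) (mul lam (g q) (h r))) (Cr lam (coprod_a lam F))"
    by (simp add: coassoc mul_assoc)
  also have "\<dots> = lin (\<lambda>(x, y). lin (\<lambda>(p, q). mul lam (f x) (mul lam (g p) (h q))) (coprod_a lam y)) (coprod_a lam F)"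
    by (simp add: lin_Cr)
  also have "\<dots> = convA lam f (convA lam g h) F"
    unfolding convA_def by (intro lin_cong) (auto simp: bilin_lin_right split_def)
  finally show ?thesis .
qed

lemma lin_er: "lin f (er U) = lin (\<lambda>(x, y). smult (counit_a y) (f x)) U"
proof (induction U rule: vec_induct)
  case (single c p)
  then show ?case by (cases p) (simp add: lin_smult)
qed (simp_all add: lin_add)

lemma lin_el: "lin f (el U) = lin (\<lambda>(x, y). smult (counit_a x) (f y)) U"
proof (induction U rule: vec_induct)
  case (single c p)
  then show ?case by (cases p) (simp add: lin_smult)
qed (simp_all add: lin_add)

lemma convA_ee_right: "convA lam f ee F = f F"
proof -
  have "convA lam f ee F = lin (\<lambda>(x, y). smult (counit_a y) (f x)) (coprod_a lam F)"
    unfolding convA_def ee_def by (intro lin_cong) (auto simp: split_def)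
  also have "\<dots> = lin f (er (coprod_a lam F))" by (simp add: lin_er)
  also have "\<dots> = f F" using counit_law[of lam F] by simp
  finally show ?thesis .
qed

lemma convA_ee_left: "convA lam ee g F = g F"
proof -
  have "convA lam ee g F = lin (\<lambda>(x, y). smult (counit_a x) (g y)) (coprod_a lam F)"
    unfolding convA_def ee_def by (intro lin_cong) (auto simp: split_def)
  also have "\<dots> = lin g (el (coprod_a lam F))" by (simp add: lin_el)
  also have "\<dots> = g F" using counit_law[of lam F] by simp
  finally show ?thesis .
qed

lemma SL_eq_SR: "SL lam = SR lam"
proof
  fix F
  have l: "convA lam (SL lam) bas = ee" by (rule ext) (simp add: convA_def ee_def SL_antipode)
  have r: "convA lam bas (SR lam) = ee" by (rule ext) (simp add: convA_def ee_def SR_antipode)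
  have "SL lam F = convA lam (SL lam) ee F" by (simp add: convA_ee_right)
  also have "\<dots> = convA lam (SL lam) (convA lam bas (SR lam)) F" by (simp add: r)
  also have "\<dots> = convA lam (convA lam (SL lam) bas) (SR lam) F" by (simp add: convA_assoc)
  also have "\<dots> = SR lam F" by (simp add: l convA_ee_left)
  finally show "SL lam F = SR lam F" .
qed

theorem mainTheorem3:
  fixes lam :: "'k::comm_ring_1"
  shows "is_hopf_algebra (fprod lam :: 'x forest \<Rightarrow> 'x forest \<Rightarrow> ('x forest \<Rightarrow>\<^sub>0 'k))
           (bas dot) (coprod_a lam) counit_a"
proof -
  have bi: "is_bialgebra (fprod lam :: 'x forest \<Rightarrow> 'x forest \<Rightarrow> ('x forest \<Rightarrow>\<^sub>0 'k))
           (bas dot) (coprod_a lam) counit_a"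
    unfolding is_bialgebra_def
  proof (intro conjI allI)
    fix a b c :: "'x forest"
    show "mul lam (fprod lam a b) (bas c) = mul lam (bas a) (fprod lam b c)"
      using assoc_bas[of lam a b c] by (simp add: FA_def)
  next
    fix a :: "'x forest"
    show "mul lam (bas dot) (bas a) = bas a" by simp
    show "mul lam (bas a) (bas dot) = bas a" by simp
  next
    fix a :: "'x forest"
    show "lin (\<lambda>(x, y). lin (\<lambda>(p, q). bas (p, q, y)) (coprod_a lam x)) (coprod_a lam a) =
          lin (\<lambda>(x, y). lin (\<lambda>(p, q). bas (x, p, q)) (coprod_a lam y)) (coprod_a lam a)"
      using coassoc[of lam a] by (simp add: Cl_def Cr_def)
  next
    fix a :: "'x forest"
    show "lin (\<lambda>(x, y). smult (counit_a x) (bas y)) (coprod_a lam a) = bas a"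
      using counit_law[of lam a] by (simp add: el_def)
    show "lin (\<lambda>(x, y). smult (counit_a y) (bas x)) (coprod_a lam a) = bas a"
      using counit_law[of lam a] by (simp add: er_def)
  next
    fix a b :: "'x forest"
    show "lin (coprod_a lam) (fprod lam a b) =
          tmul lam (coprod_a lam a) (coprod_a lam b)"
      using FM[of lam a b] by (simp add: DD_def)
  next
    show "lin (coprod_a lam) (bas dot) = tensor (bas dot) (bas dot)"
      by (simp add: cop_dot)
  next
    fix a b :: "'x forest"
    show "lin_scalar counit_a (fprod lam a b) = counit_a a * counit_a b"
      by (rule counit_mult)
  next
    show "lin_scalar counit_a (bas (dot :: 'x forest)) = (1 :: 'k)"
      by (simp add: lin_scalar_counit lookup_bas)
  qed
  have "is_antipode (fprod lam :: 'x forest \<Rightarrow> 'x forest \<Rightarrow> ('x forest \<Rightarrow>\<^sub>0 'k))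
           (bas dot) (coprod_a lam) counit_a (SL lam)"
    unfolding is_antipode_def
  proof (intro allI conjI)
    fix a :: "'x forest"
    show "lin (\<lambda>(x, y). mul lam (SL lam x) (bas y)) (coprod_a lam a) = smult (counit_a a) (bas dot)"
      by (rule SL_antipode)
    show "lin (\<lambda>(x, y). mul lam (bas x) (SL lam y)) (coprod_a lam a) = smult (counit_a a) (bas dot)"
      using SR_antipode[of lam a] by (simp add: SL_eq_SR)
  qed
  then show ?thesis using bi unfolding is_hopf_algebra_def by blast
qed


end
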